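(* Every compactly generated totally disconnected locally compact group $G$ has an essentially chief series, i.e. a finite series $\{1\}=N_0\trianglelefteq N_1\trianglelefteq\dots\trianglelefteq N_n=G$ of closed normal subgroups of $G$ such that for each $1\le i\le n$ the quotient $N_i/N_{i-1}$ is compact, or discrete, or a chief factor of $G$ (meaning there is no closed normal subgroup $N\trianglelefteq G$ with $N_{i-1}\subsetneq N\subsetneq N_i$).
   Context: All $N_i$ are required to be closed and normal in $G$ itself (not merely in $N_{i+1}$); quotients carry the quotient topology. *)

theory Defs
  imports "HOL-Analysis.Analysis" "HOL-Algebra.Coset" "HOL-Algebra.Generated_Groups"
begin

definition quotient_topology :: "'a topology \<Rightarrow> ('a \<Rightarrow> 'b) \<Rightarrow> 'b topology" where
  "quotient_topology X f =
     topology (\<lambda>V. V \<subseteq> f ` topspace X \<and> openin X {x \<in> topspace X. f x \<in> V})"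

definition totally_disconnected_space :: "'a topology \<Rightarrow> bool" where
  "totally_disconnected_space X \<longleftrightarrow>
     (\<forall>S. connectedin X S \<longrightarrow> (\<exists>a. S \<subseteq> {a}))"

definition topological_group :: "('a, 'b) monoid_scheme \<Rightarrow> 'a topology \<Rightarrow> bool" where
  "topological_group G T \<longleftrightarrow> group G \<and> topspace T = carrier G \<and>
     continuous_map (prod_topology T T) T (\<lambda>(x, y). x \<otimes>\<^bsub>G\<^esub> y) \<and>
     continuous_map T T (\<lambda>x. inv\<^bsub>G\<^esub> x)"

definition tdlc_group :: "('a, 'b) monoid_scheme \<Rightarrow> 'a topology \<Rightarrow> bool" where
  "tdlc_group G T \<longleftrightarrow> topological_group G T \<and> Hausdorff_space T \<and>
     locally_compact_space T \<and> totally_disconnected_space T"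

definition compactly_generated :: "('a, 'b) monoid_scheme \<Rightarrow> 'a topology \<Rightarrow> bool" where
  "compactly_generated G T \<longleftrightarrow>
     (\<exists>K. K \<subseteq> carrier G \<and> compactin T K \<and> generate G K = carrier G)"

text \<open>The quotient B/A (A normal in G, A \<subseteq> B) as the coset space {A #> b | b \<in> B}
  with the quotient topology from the subspace topology on B.\<close>
definition quotient_factor_topology ::
  "('a, 'b) monoid_scheme \<Rightarrow> 'a topology \<Rightarrow> 'a set \<Rightarrow> 'a set \<Rightarrow> 'a set topology" where
  "quotient_factor_topology G T B A = quotient_topology (subtopology T B) (\<lambda>x. A #>\<^bsub>G\<^esub> x)"

definition closed_normal :: "('a, 'b) monoid_scheme \<Rightarrow> 'a topology \<Rightarrow> 'a set \<Rightarrow> bool" where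
  "closed_normal G T N \<longleftrightarrow> N \<lhd> G \<and> closedin T N"

definition chief_factor :: "('a, 'b) monoid_scheme \<Rightarrow> 'a topology \<Rightarrow> 'a set \<Rightarrow> 'a set \<Rightarrow> bool" where
  "chief_factor G T B A \<longleftrightarrow> \<not> (\<exists>N. closed_normal G T N \<and> A \<subset> N \<and> N \<subset> B)"

definition essentially_chief_series ::
  "('a, 'b) monoid_scheme \<Rightarrow> 'a topology \<Rightarrow> (nat \<Rightarrow> 'a set) \<Rightarrow> nat \<Rightarrow> bool" where
  "essentially_chief_series G T N n \<longleftrightarrow>
     N 0 = {\<one>\<^bsub>G\<^esub>} \<and> N n = carrier G \<and>
     (\<forall>i\<le>n. closed_normal G T (N i)) \<and>
     (\<forall>i<n. N i \<subseteq> N (Suc i)) \<and>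
     (\<forall>i\<in>{1..n}.
        compact_space (quotient_factor_topology G T (N i) (N (i - 1))) \<or>
        quotient_factor_topology G T (N i) (N (i - 1)) =
          discrete_topology (topspace (quotient_factor_topology G T (N i) (N (i - 1)))) \<or>
        chief_factor G T (N i) (N (i - 1)))"

end

theory Submission
  imports Defs
begin
locale TG = group G for G (structure) + fixes T :: "'a topology"
  assumes top: "topspace T = carrier G"
  and mult_cont: "continuous_map (prod_topology T T) T (\<lambda>(x,y). x \<otimes> y)"
  and inv_cont: "continuous_map T T (\<lambda>x. inv x)"
begin

lemma cont_binop:
  assumes "continuous_map T T f" "continuous_map T T g"
  shows "continuous_map T T (\<lambda>x. f x \<otimes> g x)"
proof -
  have "continuous_map T (prod_topology T T) (\<lambda>x. (f x, g x))"
    using assms by (simp add: continuous_map_paired)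
  from continuous_map_compose[OF this mult_cont] show ?thesis by (simp add: o_def)
qed

lemma cont_const: "c \<in> carrier G \<Longrightarrow> continuous_map T T (\<lambda>x. c)"
  by (simp add: top)

lemma cont_lmult: "c \<in> carrier G \<Longrightarrow> continuous_map T T (\<lambda>x. c \<otimes> x)"
  by (rule cont_binop[OF cont_const]) (auto simp: continuous_map_id[unfolded id_def])

lemma cont_rmult: "c \<in> carrier G \<Longrightarrow> continuous_map T T (\<lambda>x. x \<otimes> c)"
  by (rule cont_binop[OF _ cont_const]) (auto simp: continuous_map_id[unfolded id_def])

lemma cont_conj: "c \<in> carrier G \<Longrightarrow> continuous_map T T (\<lambda>x. c \<otimes> x \<otimes> inv c)"
  by (intro cont_binop cont_lmult cont_const) auto

lemma lcoset_preimage: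
  assumes "g \<in> carrier G" "A \<subseteq> carrier G"
  shows "g <# A = {x \<in> topspace T. inv g \<otimes> x \<in> A}"
proof -
  have "x \<in> g <# A \<longleftrightarrow> x \<in> carrier G \<and> inv g \<otimes> x \<in> A" for x
  proof
    assume "x \<in> g <# A"
    then obtain a where a: "a \<in> A" "x = g \<otimes> a" unfolding l_coset_def by auto
    then show "x \<in> carrier G \<and> inv g \<otimes> x \<in> A" using assms
      by (auto simp: m_assoc[symmetric])
  next
    assume x: "x \<in> carrier G \<and> inv g \<otimes> x \<in> A"
    then have "x = g \<otimes> (inv g \<otimes> x)" using assms by (simp add: m_assoc[symmetric])
    with x show "x \<in> g <# A" unfolding l_coset_def by blast
  qed
  then show ?thesis using top by auto
qed

lemma rcoset_preimage:
  assumes "g \<in> carrier G" "A \<subseteq> carrier G"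
  shows "A #> g = {x \<in> topspace T. x \<otimes> inv g \<in> A}"
proof -
  have "x \<in> A #> g \<longleftrightarrow> x \<in> carrier G \<and> x \<otimes> inv g \<in> A" for x
  proof
    assume "x \<in> A #> g"
    then obtain a where a: "a \<in> A" "x = a \<otimes> g" unfolding r_coset_def by auto
    then show "x \<in> carrier G \<and> x \<otimes> inv g \<in> A" using assms
      by (auto simp: m_assoc)
  next
    assume x: "x \<in> carrier G \<and> x \<otimes> inv g \<in> A"
    then have "x = (x \<otimes> inv g) \<otimes> g" using assms by (simp add: m_assoc)
    with x show "x \<in> A #> g" unfolding r_coset_def by blast
  qed
  then show ?thesis using top by auto
qed

lemma openin_lcoset: "openin T A \<Longrightarrow> g \<in> carrier G \<Longrightarrow> openin T (g <# A)"
proof -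
  assume A: "openin T A" and g: "g \<in> carrier G"
  have "A \<subseteq> carrier G" using openin_subset[OF A] top by simp
  then have e: "g <# A = {x \<in> topspace T. inv g \<otimes> x \<in> A}" using lcoset_preimage g by blast
  show ?thesis unfolding e by (rule openin_continuous_map_preimage[OF cont_lmult A]) (use g in simp)
qed

lemma closedin_lcoset: "closedin T A \<Longrightarrow> g \<in> carrier G \<Longrightarrow> closedin T (g <# A)"
proof -
  assume A: "closedin T A" and g: "g \<in> carrier G"
  have "A \<subseteq> carrier G" using closedin_subset[OF A] top by simp
  then have e: "g <# A = {x \<in> topspace T. inv g \<otimes> x \<in> A}" using lcoset_preimage g by blast
  show ?thesis unfolding e by (rule closedin_continuous_map_preimage[OF cont_lmult A]) (use g in simp)
qed

lemma openin_rcoset: "openin T A \<Longrightarrow> g \<in> carrier G \<Longrightarrow> openin T (A #> g)"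
proof -
  assume A: "openin T A" and g: "g \<in> carrier G"
  have "A \<subseteq> carrier G" using openin_subset[OF A] top by simp
  then have e: "A #> g = {x \<in> topspace T. x \<otimes> inv g \<in> A}" using rcoset_preimage g by blast
  show ?thesis unfolding e by (rule openin_continuous_map_preimage[OF cont_rmult A]) (use g in simp)
qed

lemma open_subgroup_closed:
  assumes "subgroup H G" "openin T H"
  shows "closedin T H"
proof -
  have "topspace T - H = (\<Union>g\<in>carrier G - H. g <# H)"
  proof
    show "topspace T - H \<subseteq> (\<Union>g\<in>carrier G - H. g <# H)"
    proof
      fix x assume "x \<in> topspace T - H"
      then have x: "x \<in> carrier G - H" using top by auto
      have "x \<otimes> \<one> \<in> x <# H" unfolding l_coset_def using subgroup.one_closed[OF assms(1)] by blast
      then have "x \<in> x <# H" using x by simp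
      with x show "x \<in> (\<Union>g\<in>carrier G - H. g <# H)" by blast
    qed
    show "(\<Union>g\<in>carrier G - H. g <# H) \<subseteq> topspace T - H"
    proof clarify
      fix g x assume g: "g \<in> carrier G" "g \<notin> H" and x: "x \<in> g <# H"
      then obtain h where h: "h \<in> H" "x = g \<otimes> h" unfolding l_coset_def by auto
      have hc: "h \<in> carrier G" using h assms(1) subgroup.subset by blast
      show "x \<in> topspace T - H"
      proof
        have "g \<otimes> h \<in> carrier G" using g(1) hc by (rule m_closed)
        then show "x \<in> topspace T" using h(2) top by simp
        show "x \<notin> H"
        proof
          assume "x \<in> H"
          moreover have "inv h \<in> H" using subgroup.m_inv_closed[OF assms(1) h(1)] .
          ultimately have "x \<otimes> inv h \<in> H" by (rule subgroup.m_closed[OF assms(1)])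
          also have "x \<otimes> inv h = g" unfolding h(2) using g(1) hc by (simp add: m_assoc)
          finally show False using g by simp
        qed
      qed
    qed
  qed
  moreover have "openin T (\<Union>g\<in>carrier G - H. g <# H)"
    using openin_lcoset assms by auto
  ultimately have "openin T (topspace T - H)" by simp
  moreover have "H \<subseteq> topspace T" using openin_subset[OF assms(2)] .
  ultimately show ?thesis unfolding closedin_def by simp
qed

end

context TG begin

lemma compact_open_nbhd:
  assumes H: "Hausdorff_space T" and LC: "locally_compact_space T"
    and TD: "totally_disconnected_space T"
  shows "\<exists>V. openin T V \<and> compactin T V \<and> \<one> \<in> V"
proof -
  have one: "\<one> \<in> topspace T" using top by simp
  obtain Onb C where Onb: "openin T Onb" and C: "compactin T C" and oO: "\<one> \<in> Onb" and OnbC: "Onb \<subseteq> C"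
    using LC one unfolding locally_compact_space_def by blast
  define X where "X = subtopology T C"
  have cX: "compact_space X" unfolding X_def using C by (rule compact_space_subtopology)
  have hX: "Hausdorff_space X" unfolding X_def using H by (rule Hausdorff_space_subtopology)
  have tX: "topspace X = C" unfolding X_def using compactin_subset_topspace[OF C] by auto
  have oX: "\<one> \<in> topspace X" using tX oO OnbC by auto
  have qc: "quasi_component_of X \<one> = connected_component_of X \<one>"
    using cX hX by (intro quasi_eq_connected_component_of) blast
  have "connectedin X (connected_component_of_set X \<one>)"
    by (rule connectedin_connected_component_of)
  then have "connectedin T (connected_component_of_set X \<one>)"
    unfolding X_def connectedin_subtopology by blast
  then obtain a where a: "connected_component_of_set X \<one> \<subseteq> {a}"
    using TD unfolding totally_disconnected_space_def by blast
  have "\<one> \<in> connected_component_of_set X \<one>"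
    using oX by (simp add: connected_component_of_refl)
  with a have Qe: "quasi_component_of_set X \<one> = {\<one>}" using qc by auto
  have Qin: "{\<one>} \<in> quasi_components_of X"
    using quasi_component_in_quasi_components_of[of X \<one>] oX Qe by simp
  define K where "K = topspace X - Onb"
  have "openin X Onb" unfolding X_def openin_subtopology using Onb OnbC by blast
  then have "closedin X K" unfolding K_def by (rule closedin_diff[OF closedin_topspace])
  then have Kc: "compactin X K" by (rule closedin_compact_space[OF cX])
  have "disjnt {\<one>} K" unfolding K_def using oO by simp
  then have "separated_between X {\<one>} K"
    using separated_between_quasi_component_compact[OF Qin Kc] by simp
  then obtain A B where A: "openin X A" and B: "openin X B" and AB: "A \<union> B = topspace X"
    and dAB: "disjnt A B" and oA: "{\<one>} \<subseteq> A" and KB: "K \<subseteq> B"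
    unfolding separated_between_def by blast
  have AO: "A \<subseteq> Onb"
  proof
    fix x assume x: "x \<in> A"
    then have "x \<in> topspace X" using AB by blast
    show "x \<in> Onb"
    proof (rule ccontr)
      assume "x \<notin> Onb"
      then have "x \<in> B" using KB \<open>x \<in> topspace X\<close> unfolding K_def by blast
      then show False using x dAB by (auto simp: disjnt_def)
    qed
  qed
  obtain V where V: "openin T V" and AV: "A = V \<inter> C"
    using A unfolding X_def openin_subtopology by blast
  have "A = V \<inter> Onb" using AV AO OnbC by blast
  then have Aop: "openin T A" using V Onb by auto
  have "A = topspace X - B" using AB dAB by (auto simp: disjnt_def)
  then have "closedin X A" using B by auto
  then have "compactin X A" by (rule closedin_compact_space[OF cX])
  then have "compactin T A" unfolding X_def compactin_subtopology by blast
  with Aop oA show ?thesis by blast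
qed

lemma van_dantzig:
  assumes H: "Hausdorff_space T" and LC: "locally_compact_space T"
    and TD: "totally_disconnected_space T"
  shows "\<exists>U. subgroup U G \<and> openin T U \<and> compactin T U"
proof -
  obtain V where Vo: "openin T V" and Vc: "compactin T V" and oV: "\<one> \<in> V"
    using compact_open_nbhd[OF assms] by blast
  have Vcar: "V \<subseteq> carrier G" using openin_subset[OF Vo] top by simp
  define P where "P = {p \<in> topspace (prod_topology T T). (\<lambda>(x,y). x \<otimes> y) p \<in> V}"
  have Po: "openin (prod_topology T T) P"
    unfolding P_def by (rule openin_continuous_map_preimage[OF mult_cont Vo])
  have "\<forall>v\<in>V. \<exists>AB. openin T (fst AB) \<and> openin T (snd AB) \<and> v \<in> fst AB \<and> \<one> \<in> snd AB \<and> fst AB \<times> snd AB \<subseteq> P"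
  proof
    fix v assume v: "v \<in> V"
    then have vc: "v \<in> carrier G" using Vcar by blast
    have vP: "(v, \<one>) \<in> P" unfolding P_def using v vc top by simp
    have hP: "\<forall>x y. (x,y) \<in> P \<longrightarrow> (\<exists>A B. openin T A \<and> openin T B \<and> x \<in> A \<and> y \<in> B \<and> A \<times> B \<subseteq> P)"
      using Po by (simp only: openin_prod_topology_alt)
    obtain A B where "openin T A \<and> openin T B \<and> v \<in> A \<and> \<one> \<in> B \<and> A \<times> B \<subseteq> P"
      using hP[rule_format, OF vP] by blast
    then show "\<exists>AB. openin T (fst AB) \<and> openin T (snd AB) \<and> v \<in> fst AB \<and> \<one> \<in> snd AB \<and> fst AB \<times> snd AB \<subseteq> P"
      by (intro exI[of _ "(A,B)"]) simp
  qed
  from bchoice[OF this] obtain ab where ab0: "\<forall>v\<in>V. openin T (fst (ab v)) \<and> openin T (snd (ab v)) \<and> v \<in> fst (ab v) \<and> \<one> \<in> snd (ab v) \<and> fst (ab v) \<times> snd (ab v) \<subseteq> P"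
    by blast
  have ab: "\<And>v. v \<in> V \<Longrightarrow> openin T (fst (ab v)) \<and> openin T (snd (ab v)) \<and> v \<in> fst (ab v) \<and> \<one> \<in> snd (ab v) \<and> fst (ab v) \<times> snd (ab v) \<subseteq> P"
    using ab0 by blast
  define A where "A v = fst (ab v)" for v
  define B where "B v = snd (ab v)" for v
  have "V \<subseteq> \<Union>(A ` V)" using ab unfolding A_def by blast
  moreover have "\<forall>X\<in>A ` V. openin T X" using ab unfolding A_def by blast
  ultimately have "\<exists>\<F>. finite \<F> \<and> \<F> \<subseteq> A ` V \<and> V \<subseteq> \<Union>\<F>"
    using Vc unfolding compactin_def by blast
  then obtain \<F> where F: "finite \<F>" "\<F> \<subseteq> A ` V" "V \<subseteq> \<Union>\<F>" by blast
  then obtain F0 where F0: "F0 \<subseteq> V" "finite F0" "\<F> = A ` F0"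
    by (meson finite_subset_image)
  define W0 where "W0 = \<Inter>(insert V (B ` F0))"
  have W0o: "openin T W0" unfolding W0_def
    using F0 ab Vo by (intro openin_Inter) (auto simp: B_def)
  have oW0: "\<one> \<in> W0" unfolding W0_def using F0 ab oV by (auto simp: B_def)
  have W0V: "W0 \<subseteq> V" unfolding W0_def by blast
  have VW0: "v \<otimes> w \<in> V" if v: "v \<in> V" and w: "w \<in> W0" for v w
  proof -
    obtain v' where v': "v' \<in> F0" "v \<in> A v'" using F F0 v by blast
    have "w \<in> B v'" using w v' unfolding W0_def by blast
    then have "(v, w) \<in> P" using ab[of v'] v' F0 unfolding A_def B_def by blast
    then show ?thesis unfolding P_def by simp
  qed
  define W where "W = W0 \<inter> {x \<in> topspace T. inv x \<in> W0}"
  have Wo: "openin T W" unfolding W_def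
    using W0o openin_continuous_map_preimage[OF inv_cont W0o] by blast
  have oW: "\<one> \<in> W" unfolding W_def using oW0 top by simp
  define U where "U = {g \<in> carrier G. \<forall>v\<in>V. v \<otimes> g \<in> V \<and> v \<otimes> inv g \<in> V}"
  have Usub: "subgroup U G"
  proof (rule subgroupI)
    show "U \<subseteq> carrier G" unfolding U_def by blast
    have "\<one> \<in> U" unfolding U_def using Vcar by auto
    then show "U \<noteq> {}" by blast
    fix a assume a: "a \<in> U"
    then have ac: "a \<in> carrier G" unfolding U_def by blast
    show "inv a \<in> U" using a ac unfolding U_def by simp
  next
    fix a b assume a: "a \<in> U" and b: "b \<in> U"
    then have ac: "a \<in> carrier G" and bc: "b \<in> carrier G" unfolding U_def by auto
    show "a \<otimes> b \<in> U" unfolding U_def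
    proof (intro CollectI conjI ballI)
      show "a \<otimes> b \<in> carrier G" using ac bc by simp
      fix v assume v: "v \<in> V"
      have vc: "v \<in> carrier G" using v Vcar by blast
      have "v \<otimes> a \<in> V" using a v unfolding U_def by blast
      then have "(v \<otimes> a) \<otimes> b \<in> V" using b unfolding U_def by blast
      then show "v \<otimes> (a \<otimes> b) \<in> V" using vc ac bc by (simp add: m_assoc)
      have "v \<otimes> inv b \<in> V" using b v unfolding U_def by blast
      then have "(v \<otimes> inv b) \<otimes> inv a \<in> V" using a unfolding U_def by blast
      then show "v \<otimes> inv (a \<otimes> b) \<in> V" using vc ac bc by (simp add: m_assoc inv_mult_group)
    qed
  qed
  have WU: "W \<subseteq> U"
  proof
    fix w assume w: "w \<in> W"
    then have wc: "w \<in> carrier G" using top unfolding W_def by blast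
    have "w \<in> W0" "inv w \<in> W0" using w unfolding W_def by auto
    then show "w \<in> U" unfolding U_def using wc VW0 by blast
  qed
  have Uo: "openin T U"
  proof (subst openin_subopen, intro ballI)
    fix g assume g: "g \<in> U"
    then have gc: "g \<in> carrier G" unfolding U_def by blast
    have "openin T (g <# W)" using openin_lcoset[OF Wo gc] .
    moreover have "g \<otimes> \<one> \<in> g <# W" using oW unfolding l_coset_def by blast
    then have "g \<in> g <# W" using gc by simp
    moreover have "g <# W \<subseteq> U"
    proof
      fix x assume "x \<in> g <# W"
      then obtain w where w: "w \<in> W" "x = g \<otimes> w" unfolding l_coset_def by blast
      have "w \<in> U" using w(1) WU by blast
      have "g \<otimes> w \<in> U" by (rule subgroup.m_closed[OF Usub g \<open>w \<in> U\<close>])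
      then show "x \<in> U" using w(2) by simp
    qed
    ultimately show "\<exists>T'. openin T T' \<and> g \<in> T' \<and> T' \<subseteq> U" by blast
  qed
  have UV: "U \<subseteq> V"
  proof
    fix g assume g: "g \<in> U"
    then have "\<one> \<otimes> g \<in> V" using oV unfolding U_def by blast
    then show "g \<in> V" using g unfolding U_def by simp
  qed
  have "closedin T U" using open_subgroup_closed[OF Usub Uo] .
  then have "compactin T U" using closed_compactin[OF Vc UV] by blast
  then show ?thesis using Usub Uo by blast
qed

end

lemma card_image_factor_aux:
  assumes "\<forall>r\<in>R. \<forall>r'\<in>R. h r = h r' \<longrightarrow> f r = f r'"
  shows "f ` R = (\<lambda>Y. f (SOME r. r \<in> R \<and> h r = Y)) ` (h ` R)"
    and "\<And>r. r \<in> R \<Longrightarrow> (\<lambda>Y. f (SOME r. r \<in> R \<and> h r = Y)) (h r) = f r"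
proof -
  show F: "\<And>r. r \<in> R \<Longrightarrow> (\<lambda>Y. f (SOME r. r \<in> R \<and> h r = Y)) (h r) = f r"
  proof -
    fix r assume r: "r \<in> R"
    have "\<exists>r0. r0 \<in> R \<and> h r0 = h r" using r by blast
    then have "(SOME r0. r0 \<in> R \<and> h r0 = h r) \<in> R \<and> h (SOME r0. r0 \<in> R \<and> h r0 = h r) = h r"
      by (rule someI_ex)
    then show "(\<lambda>Y. f (SOME r. r \<in> R \<and> h r = Y)) (h r) = f r" using assms r by blast
  qed
  show "f ` R = (\<lambda>Y. f (SOME r. r \<in> R \<and> h r = Y)) ` (h ` R)"
    unfolding image_image using F by (auto intro: image_cong)
qed

lemma card_image_factor:
  assumes "finite R" "\<forall>r\<in>R. \<forall>r'\<in>R. h r = h r' \<longrightarrow> f r = f r'"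
  shows "card (f ` R) \<le> card (h ` R)"
  using card_image_factor_aux(1)[OF assms(2)] card_image_le[of "h ` R"] assms(1) by simp

lemma card_image_factor_eq:
  assumes "finite R" "\<forall>r\<in>R. \<forall>r'\<in>R. h r = h r' \<longrightarrow> f r = f r'"
    and "card (f ` R) = card (h ` R)" and "r \<in> R" "r' \<in> R" "f r = f r'"
  shows "h r = h r'"
proof -
  define F where "F = (\<lambda>Y. f (SOME r. r \<in> R \<and> h r = Y))"
  have e: "f ` R = F ` (h ` R)" unfolding F_def by (rule card_image_factor_aux(1)[OF assms(2)])
  have Fr: "\<And>r. r \<in> R \<Longrightarrow> F (h r) = f r" unfolding F_def by (rule card_image_factor_aux(2)[OF assms(2)])
  have "card (F ` (h ` R)) = card (h ` R)" using e assms(3) by simp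
  then have "inj_on F (h ` R)" using assms(1) by (intro eq_card_imp_inj_on) auto
  moreover have "F (h r) = F (h r')" using Fr assms(4,5,6) by simp
  ultimately show ?thesis using assms(4,5) unfolding inj_on_def by blast
qed

context TG begin

lemma cancel1: "b \<in> carrier G \<Longrightarrow> x \<in> carrier G \<Longrightarrow> b \<otimes> (inv b \<otimes> x) = x"
  by (simp add: m_assoc[symmetric])

lemma cancel2: "b \<in> carrier G \<Longrightarrow> x \<in> carrier G \<Longrightarrow> inv b \<otimes> (b \<otimes> x) = x"
  by (simp add: m_assoc[symmetric])

lemma normal_conj: "N \<lhd> G \<Longrightarrow> x \<in> carrier G \<Longrightarrow> n \<in> N \<Longrightarrow> x \<otimes> n \<otimes> inv x \<in> N"
  using normal_inv_iff by blast

lemma normal_conj': "N \<lhd> G \<Longrightarrow> x \<in> carrier G \<Longrightarrow> n \<in> N \<Longrightarrow> inv x \<otimes> n \<otimes> x \<in> N"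
  using normal_conj[of N "inv x" n] by simp

lemma normal_sub: "N \<lhd> G \<Longrightarrow> N \<subseteq> carrier G"
  using normal_imp_subgroup subgroup.subset by blast

end

locale CG = TG +
  fixes U K0
  assumes Usub: "subgroup U G" and Uo: "openin T U" and Uc: "compactin T U"
    and K0s: "K0 \<subseteq> carrier G" and K0c: "compactin T K0" and gen: "generate G K0 = carrier G"
begin

lemma Ucar: "U \<subseteq> carrier G" using Usub subgroup.subset by blast

definition UH where "UH N = {u \<otimes> n | u n. u \<in> U \<and> n \<in> N}"

lemma UH_subgroup:
  assumes N: "N \<lhd> G"
  shows "subgroup (UH N) G"
proof (rule subgroupI)
  have Nc: "N \<subseteq> carrier G" using normal_sub[OF N] .
  have oN: "\<one> \<in> N" using normal_imp_subgroup[OF N] subgroup.one_closed by blast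
  have oU: "\<one> \<in> U" using Usub subgroup.one_closed by blast
  show "UH N \<subseteq> carrier G" unfolding UH_def using Nc Ucar by auto
  have "\<one> \<otimes> \<one> \<in> UH N" unfolding UH_def using oN oU by blast
  then show "UH N \<noteq> {}" by blast
next
  have Nc: "N \<subseteq> carrier G" using normal_sub[OF N] .
  fix a assume "a \<in> UH N"
  then obtain u n where un: "u \<in> U" "n \<in> N" and a: "a = u \<otimes> n" unfolding UH_def by blast
  have uc: "u \<in> carrier G" and nc: "n \<in> carrier G" using un Ucar Nc by auto
  have n': "u \<otimes> inv n \<otimes> inv u \<in> N"
    using normal_conj[OF N uc] subgroup.m_inv_closed[OF normal_imp_subgroup[OF N] un(2)] by blast
  have iu: "inv u \<in> U" using subgroup.m_inv_closed[OF Usub un(1)] .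
  have "inv a = inv u \<otimes> (u \<otimes> inv n \<otimes> inv u)"
    unfolding a using uc nc by (simp add: m_assoc inv_mult_group cancel2)
  then show "inv a \<in> UH N" unfolding UH_def using n' iu by blast
next
  have Nc: "N \<subseteq> carrier G" using normal_sub[OF N] .
  fix a b assume "a \<in> UH N" "b \<in> UH N"
  then obtain u1 n1 u2 n2 where un: "u1 \<in> U" "n1 \<in> N" "u2 \<in> U" "n2 \<in> N"
    and a: "a = u1 \<otimes> n1" and b: "b = u2 \<otimes> n2" unfolding UH_def by blast
  have c: "u1 \<in> carrier G" "n1 \<in> carrier G" "u2 \<in> carrier G" "n2 \<in> carrier G"
    using un Ucar Nc by auto
  have n': "inv u2 \<otimes> n1 \<otimes> u2 \<in> N" using normal_conj'[OF N c(3) un(2)] .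
  have n'': "inv u2 \<otimes> n1 \<otimes> u2 \<otimes> n2 \<in> N"
    using subgroup.m_closed[OF normal_imp_subgroup[OF N] n' un(4)] .
  have u': "u1 \<otimes> u2 \<in> U" using subgroup.m_closed[OF Usub un(1) un(3)] .
  have "a \<otimes> b = (u1 \<otimes> u2) \<otimes> (inv u2 \<otimes> n1 \<otimes> u2 \<otimes> n2)"
    unfolding a b using c by (simp add: m_assoc cancel1)
  then show "a \<otimes> b \<in> UH N" unfolding UH_def using n'' u' by blast
qed

lemma U_UH: "N \<lhd> G \<Longrightarrow> U \<subseteq> UH N"
proof
  fix u assume N: "N \<lhd> G" and u: "u \<in> U"
  have "\<one> \<in> N" using normal_imp_subgroup[OF N] subgroup.one_closed by blast
  then have "u \<otimes> \<one> \<in> UH N" unfolding UH_def using u by blast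
  then show "u \<in> UH N" using u Ucar by auto
qed

lemma N_UH: "N \<lhd> G \<Longrightarrow> N \<subseteq> UH N"
proof
  fix n assume N: "N \<lhd> G" and n: "n \<in> N"
  have "\<one> \<in> U" using Usub subgroup.one_closed by blast
  then have "\<one> \<otimes> n \<in> UH N" unfolding UH_def using n by blast
  then show "n \<in> UH N" using n normal_sub[OF N] by auto
qed

lemma UH_mono: "N \<subseteq> M \<Longrightarrow> UH N \<subseteq> UH M"
  unfolding UH_def by blast

lemma UH_eq_Union: "UH N = (\<Union>n\<in>N. U #> n)"
  unfolding UH_def r_coset_def by blast

lemma UH_open: "N \<lhd> G \<Longrightarrow> openin T (UH N)"
  unfolding UH_eq_Union using normal_sub openin_rcoset[OF Uo] by blast

lemma UH_closed: "N \<lhd> G \<Longrightarrow> closedin T (UH N)"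
  using open_subgroup_closed UH_subgroup UH_open by blast

definition S where "S = K0 \<union> (\<lambda>x. inv x) ` K0"
definition W where "W = {u \<otimes> s | u s. u \<in> U \<and> s \<in> S}"

lemma S_car: "S \<subseteq> carrier G" unfolding S_def using K0s by auto

lemma W_car: "W \<subseteq> carrier G" unfolding W_def using S_car Ucar by auto

lemma S_W: "S \<subseteq> W"
proof
  fix s assume s: "s \<in> S"
  have "\<one> \<in> U" using Usub subgroup.one_closed by blast
  then have "\<one> \<otimes> s \<in> W" unfolding W_def using s by blast
  then show "s \<in> W" using s S_car by auto
qed

lemma US_W: "u \<in> U \<Longrightarrow> s \<in> S \<Longrightarrow> u \<otimes> s \<in> W"
  unfolding W_def by blast

lemma W_compact: "compactin T W"
proof -
  have "compactin T ((\<lambda>x. inv x) ` K0)" by (rule image_compactin[OF K0c inv_cont])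
  then have Sc: "compactin T S" unfolding S_def using K0c by (simp add: compactin_Un)
  have "compactin (prod_topology T T) (U \<times> S)" using Sc Uc by (simp add: compactin_Times)
  from image_compactin[OF this mult_cont]
  have "compactin T ((\<lambda>(x,y). x \<otimes> y) ` (U \<times> S))" .
  moreover have "(\<lambda>(x,y). x \<otimes> y) ` (U \<times> S) = W" unfolding W_def by auto
  ultimately show ?thesis by simp
qed

lemma R_exists: "\<exists>R. finite R \<and> R \<subseteq> W \<and> (\<forall>w\<in>W. \<exists>r\<in>R. inv r \<otimes> w \<in> U)"
proof -
  have oU: "\<one> \<in> U" using Usub subgroup.one_closed by blast
  have "\<forall>X\<in>(\<lambda>w. w <# U) ` W. openin T X" using openin_lcoset[OF Uo] W_car by blast
  moreover have "W \<subseteq> \<Union>((\<lambda>w. w <# U) ` W)"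
  proof
    fix w assume w: "w \<in> W"
    then have "w \<otimes> \<one> \<in> w <# U" unfolding l_coset_def using oU by blast
    then have "w \<in> w <# U" using w W_car by auto
    then show "w \<in> \<Union>((\<lambda>w. w <# U) ` W)" using w by blast
  qed
  ultimately have "\<exists>\<F>. finite \<F> \<and> \<F> \<subseteq> (\<lambda>w. w <# U) ` W \<and> W \<subseteq> \<Union>\<F>"
    using W_compact unfolding compactin_def by blast
  then obtain \<F> where F: "finite \<F>" "\<F> \<subseteq> (\<lambda>w. w <# U) ` W" "W \<subseteq> \<Union>\<F>" by blast
  then obtain R where R: "R \<subseteq> W" "finite R" "\<F> = (\<lambda>w. w <# U) ` R"
    by (meson finite_subset_image)
  have "\<forall>w\<in>W. \<exists>r\<in>R. inv r \<otimes> w \<in> U"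
  proof
    fix w assume w: "w \<in> W"
    then obtain r where r: "r \<in> R" "w \<in> r <# U" using F R by blast
    then obtain u where u: "u \<in> U" "w = r \<otimes> u" unfolding l_coset_def by blast
    have "inv r \<otimes> w = u" unfolding u(2) using r(1) R(1) W_car u(1) Ucar by (intro cancel2) auto
    then have "inv r \<otimes> w \<in> U" using u(1) by simp
    then show "\<exists>r\<in>R. inv r \<otimes> w \<in> U" using r(1) by blast
  qed
  then show ?thesis using R by blast
qed

definition R where "R = (SOME R. finite R \<and> R \<subseteq> W \<and> (\<forall>w\<in>W. \<exists>r\<in>R. inv r \<otimes> w \<in> U))"

lemma R_props: "finite R" "R \<subseteq> W" "\<And>w. w \<in> W \<Longrightarrow> \<exists>r\<in>R. inv r \<otimes> w \<in> U"
proof -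
  have "finite R \<and> R \<subseteq> W \<and> (\<forall>w\<in>W. \<exists>r\<in>R. inv r \<otimes> w \<in> U)"
    unfolding R_def by (rule someI_ex[OF R_exists])
  then show "finite R" "R \<subseteq> W" "\<And>w. w \<in> W \<Longrightarrow> \<exists>r\<in>R. inv r \<otimes> w \<in> U" by auto
qed

lemma R_car: "R \<subseteq> carrier G" using R_props(2) W_car by blast

definition cls where "cls N r = {r' \<in> R. inv r \<otimes> r' \<in> UH N}"
definition d where "d N = card (cls N ` R)"

lemma rel_refl: "N \<lhd> G \<Longrightarrow> r \<in> carrier G \<Longrightarrow> inv r \<otimes> r \<in> UH N"
  using subgroup.one_closed[OF UH_subgroup] by simp

lemma rel_sym: "N \<lhd> G \<Longrightarrow> r \<in> carrier G \<Longrightarrow> r' \<in> carrier G \<Longrightarrow> inv r \<otimes> r' \<in> UH N \<Longrightarrow> inv r' \<otimes> r \<in> UH N"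
  using subgroup.m_inv_closed[OF UH_subgroup, of N "inv r \<otimes> r'"] by (simp add: inv_mult_group)

lemma rel_trans: "N \<lhd> G \<Longrightarrow> a \<in> carrier G \<Longrightarrow> b \<in> carrier G \<Longrightarrow> c \<in> carrier G \<Longrightarrow>
   inv a \<otimes> b \<in> UH N \<Longrightarrow> inv b \<otimes> c \<in> UH N \<Longrightarrow> inv a \<otimes> c \<in> UH N"
  using subgroup.m_closed[OF UH_subgroup, of N "inv a \<otimes> b" "inv b \<otimes> c"] by (simp add: m_assoc cancel1)

lemma cls_eq_iff:
  assumes N: "N \<lhd> G" and r: "r \<in> R" and r': "r' \<in> R"
  shows "cls N r = cls N r' \<longleftrightarrow> inv r \<otimes> r' \<in> UH N"
proof
  have rc: "r \<in> carrier G" and rc': "r' \<in> carrier G" using r r' R_car by auto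
  assume "cls N r = cls N r'"
  moreover have "r' \<in> cls N r'" unfolding cls_def using r' rel_refl[OF N rc'] by blast
  ultimately show "inv r \<otimes> r' \<in> UH N" unfolding cls_def by blast
next
  have rc: "r \<in> carrier G" and rc': "r' \<in> carrier G" using r r' R_car by auto
  assume h: "inv r \<otimes> r' \<in> UH N"
  have A: "x \<in> cls N r'" if xx: "x \<in> cls N r" for x
  proof -
    have x: "x \<in> R" "inv r \<otimes> x \<in> UH N" using xx unfolding cls_def by auto
    have xc: "x \<in> carrier G" using x R_car by auto
    have "inv r' \<otimes> r \<in> UH N" using rel_sym[OF N rc rc' h] .
    then have "inv r' \<otimes> x \<in> UH N" using rel_trans[OF N rc' rc xc] x by blast
    then show "x \<in> cls N r'" unfolding cls_def using x by blast
  qed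
  have B: "x \<in> cls N r" if xx: "x \<in> cls N r'" for x
  proof -
    have x: "x \<in> R" "inv r' \<otimes> x \<in> UH N" using xx unfolding cls_def by auto
    have xc: "x \<in> carrier G" using x R_car by auto
    have "inv r \<otimes> x \<in> UH N" using rel_trans[OF N rc rc' xc h] x by blast
    then show "x \<in> cls N r" unfolding cls_def using x by blast
  qed
  from A B show "cls N r = cls N r'" by blast
qed

lemma d_mono:
  assumes K: "K \<lhd> G" and L: "L \<lhd> G" and KL: "K \<subseteq> L"
  shows "d L \<le> d K"
  unfolding d_def
proof (rule card_image_factor[OF R_props(1)], intro ballI impI)
  fix r r' assume r: "r \<in> R" and r': "r' \<in> R" and "cls K r = cls K r'"
  then have "inv r \<otimes> r' \<in> UH K" using cls_eq_iff[OF K r r'] by blast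
  then have "inv r \<otimes> r' \<in> UH L" using UH_mono[OF KL] by blast
  then show "cls L r = cls L r'" using cls_eq_iff[OF L r r'] by blast
qed

lemma d_eq_rel:
  assumes K: "K \<lhd> G" and L: "L \<lhd> G" and KL: "K \<subseteq> L" and dd: "d K = d L"
    and r: "r \<in> R" and r': "r' \<in> R" and h: "inv r \<otimes> r' \<in> UH L"
  shows "inv r \<otimes> r' \<in> UH K"
proof -
  have fac: "\<forall>r\<in>R. \<forall>r'\<in>R. cls K r = cls K r' \<longrightarrow> cls L r = cls L r'"
  proof (intro ballI impI)
    fix r r' assume r: "r \<in> R" and r': "r' \<in> R" and "cls K r = cls K r'"
    then have "inv r \<otimes> r' \<in> UH K" using cls_eq_iff[OF K r r'] by blast
    then have "inv r \<otimes> r' \<in> UH L" using UH_mono[OF KL] by blast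
    then show "cls L r = cls L r'" using cls_eq_iff[OF L r r'] by blast
  qed
  have "cls L r = cls L r'" using cls_eq_iff[OF L r r'] h by blast
  then have "cls K r = cls K r'"
    using card_image_factor_eq[OF R_props(1) fac _ r r'] dd unfolding d_def by simp
  then show ?thesis using cls_eq_iff[OF K r r'] by blast
qed

lemma d_cong:
  assumes "\<And>r r'. r \<in> R \<Longrightarrow> r' \<in> R \<Longrightarrow> inv r \<otimes> r' \<in> UH N \<longleftrightarrow> inv r \<otimes> r' \<in> UH M"
  shows "d N = d M"
proof -
  have "cls N r = cls M r" if "r \<in> R" for r unfolding cls_def using assms that by blast
  then have "cls N ` R = cls M ` R" by (rule image_cong[OF refl])
  then show ?thesis unfolding d_def by simp
qed

end

lemma quotient_topology_istopology:
  "istopology (\<lambda>V. V \<subseteq> f ` topspace X \<and> openin X {x \<in> topspace X. f x \<in> V})"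
proof -
  let ?P = "\<lambda>V. V \<subseteq> f ` topspace X \<and> openin X {x \<in> topspace X. f x \<in> V}"
  have 1: "?P (S \<inter> T)" if S: "?P S" and T: "?P T" for S T
  proof -
    have "{x \<in> topspace X. f x \<in> S \<inter> T} = {x \<in> topspace X. f x \<in> S} \<inter> {x \<in> topspace X. f x \<in> T}" by blast
    then show ?thesis using S T by auto
  qed
  have 2: "?P (\<Union>K)" if K: "\<forall>S\<in>K. ?P S" for K
  proof -
    have "{x \<in> topspace X. f x \<in> \<Union>K} = (\<Union>S\<in>K. {x \<in> topspace X. f x \<in> S})" by blast
    then show ?thesis using K by auto
  qed
  show ?thesis unfolding istopology_def using 1 2 by blast
qed

lemma openin_quotient_topology:
  "openin (quotient_topology X f) V \<longleftrightarrow> V \<subseteq> f ` topspace X \<and> openin X {x \<in> topspace X. f x \<in> V}"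
  unfolding quotient_topology_def topology_inverse'[OF quotient_topology_istopology] ..

lemma topspace_quotient_topology: "topspace (quotient_topology X f) = f ` topspace X"
proof -
  have e: "{x \<in> topspace X. f x \<in> f ` topspace X} = topspace X" by blast
  have "openin (quotient_topology X f) (f ` topspace X)"
    unfolding openin_quotient_topology e by simp
  then have "f ` topspace X \<subseteq> topspace (quotient_topology X f)" by (rule openin_subset)
  moreover have "topspace (quotient_topology X f) \<subseteq> f ` topspace X"
    using openin_quotient_topology[of X f "topspace (quotient_topology X f)"] by simp
  ultimately show ?thesis by blast
qed

lemma continuous_map_quotient: "continuous_map X (quotient_topology X f) f"
  unfolding continuous_map_def topspace_quotient_topology openin_quotient_topology by auto

context TG begin

lemma quotient_discrete:
  assumes M: "M \<lhd> G" and L: "subgroup L G" and H: "openin T H" and MLe: "M = L \<inter> H"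
  shows "quotient_factor_topology G T L M =
           discrete_topology (topspace (quotient_factor_topology G T L M))"
proof -
  have Lc: "L \<subseteq> carrier G" using L subgroup.subset by blast
  have Ms: "subgroup M G" using normal_imp_subgroup[OF M] .
  have Hc: "H \<subseteq> carrier G" using openin_subset[OF H] top by simp
  define f where "f = (\<lambda>x. M #> x)"
  define X where "X = subtopology T L"
  have tX: "topspace X = L" unfolding X_def using Lc top by auto
  have Q: "quotient_factor_topology G T L M = quotient_topology X f"
    unfolding quotient_factor_topology_def X_def f_def by simp
  have cos_open: "openin X (M #> x)" if x: "x \<in> L" for x
  proof -
    have xc: "x \<in> carrier G" using x Lc by blast
    have "M #> x = L \<inter> (H #> x)"
    proof (rule Set.set_eqI)
      fix y
      show "y \<in> M #> x \<longleftrightarrow> y \<in> L \<inter> (H #> x)"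
      proof
        assume "y \<in> M #> x"
        then obtain m where m: "m \<in> M" "y = m \<otimes> x" unfolding r_coset_def by blast
        have "m \<in> L" "m \<in> H" using m(1) MLe by auto
        then have "m \<otimes> x \<in> L" using subgroup.m_closed[OF L _ x] by blast
        moreover have "m \<otimes> x \<in> H #> x" unfolding r_coset_def using \<open>m \<in> H\<close> by blast
        ultimately show "y \<in> L \<inter> (H #> x)" using m(2) by simp
      next
        assume "y \<in> L \<inter> (H #> x)"
        then obtain h where h: "h \<in> H" "y = h \<otimes> x" and yL: "y \<in> L" unfolding r_coset_def by blast
        have hc: "h \<in> carrier G" using h Hc by blast
        have "y \<otimes> inv x \<in> L" using subgroup.m_closed[OF L yL subgroup.m_inv_closed[OF L x]] .
        moreover have "y \<otimes> inv x = h" unfolding h(2) using hc xc by (simp add: m_assoc)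
        ultimately have "h \<in> M" using h MLe by simp
        then show "y \<in> M #> x" unfolding r_coset_def using h(2) by blast
      qed
    qed
    moreover have "openin X (L \<inter> (H #> x))" unfolding X_def
      by (rule openin_subtopology_Int2[OF openin_rcoset[OF H xc]])
    ultimately show ?thesis by simp
  qed
  show ?thesis unfolding Q
  proof (subst topology_eq, intro allI iffI)
    fix V assume "openin (quotient_topology X f) V"
    then show "openin (discrete_topology (topspace (quotient_topology X f))) V"
      using openin_subset by simp
  next
    fix V assume "openin (discrete_topology (topspace (quotient_topology X f))) V"
    then have V: "V \<subseteq> f ` topspace X" by (simp add: topspace_quotient_topology)
    have "openin X {x \<in> topspace X. f x \<in> V}"
    proof (subst openin_subopen, intro ballI)
      fix x assume x: "x \<in> {x \<in> topspace X. f x \<in> V}"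
      then have xL: "x \<in> L" and fx: "f x \<in> V" using tX by auto
      have xc: "x \<in> carrier G" using xL Lc by blast
      have "\<one> \<otimes> x \<in> M #> x" unfolding r_coset_def using subgroup.one_closed[OF Ms] by blast
      then have xin: "x \<in> M #> x" using xc by simp
      have sub: "M #> x \<subseteq> {x \<in> topspace X. f x \<in> V}"
      proof
        fix y assume y: "y \<in> M #> x"
        then obtain m where m: "m \<in> M" "y = m \<otimes> x" unfolding r_coset_def by blast
        have "m \<in> L" using m(1) MLe by auto
        then have "m \<otimes> x \<in> L" using subgroup.m_closed[OF L _ xL] by blast
        then have yL: "y \<in> L" using m(2) by simp
        have "M #> x = M #> y" by (rule repr_independence[OF y xc Ms])
        then have "f y \<in> V" using fx unfolding f_def by simp
        then show "y \<in> {x \<in> topspace X. f x \<in> V}" using yL tX by simp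
      qed
      show "\<exists>T'. openin X T' \<and> x \<in> T' \<and> T' \<subseteq> {x \<in> topspace X. f x \<in> V}"
        using cos_open[OF xL] xin sub by blast
    qed
    then show "openin (quotient_topology X f) V"
      unfolding openin_quotient_topology using V by simp
  qed
qed

end

context CG begin

lemma quotient_compact:
  assumes K: "K \<lhd> G" and Ms: "subgroup M G" and Mcl: "closedin T M"
    and KM: "K \<subseteq> M" and MU: "M \<subseteq> UH K"
  shows "compact_space (quotient_factor_topology G T M K)"
proof -
  have Mc: "M \<subseteq> carrier G" using Ms subgroup.subset by blast
  have Ks: "subgroup K G" using normal_imp_subgroup[OF K] .
  define f where "f = (\<lambda>x. K #> x)"
  define X where "X = subtopology T M"
  have tX: "topspace X = M" unfolding X_def using Mc top by auto
  have Q: "quotient_factor_topology G T M K = quotient_topology X f"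
    unfolding quotient_factor_topology_def X_def f_def by simp
  have img: "f ` M = f ` (U \<inter> M)"
  proof
    show "f ` (U \<inter> M) \<subseteq> f ` M" by blast
    show "f ` M \<subseteq> f ` (U \<inter> M)"
    proof
      fix y assume "y \<in> f ` M"
      then obtain x where x: "x \<in> M" "y = f x" by blast
      then have "x \<in> UH K" using MU by blast
      then obtain u k where uk: "u \<in> U" "k \<in> K" "x = u \<otimes> k" unfolding UH_def by blast
      have uc: "u \<in> carrier G" and kc: "k \<in> carrier G" using uk Ucar normal_sub[OF K] by auto
      have "x \<otimes> inv k \<in> M" using x(1) subgroup.m_inv_closed[OF Ms] KM uk(2)
        subgroup.m_closed[OF Ms] by blast
      moreover have "x \<otimes> inv k = u" unfolding uk(3) using uc kc by (simp add: m_assoc)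
      ultimately have uM: "u \<in> M" by simp
      have "u \<otimes> k \<otimes> inv u \<in> K" by (rule normal_conj[OF K uc uk(2)])
      moreover have "(u \<otimes> k \<otimes> inv u) \<otimes> u = x" unfolding uk(3) using uc kc by (simp add: m_assoc)
      ultimately have "x \<in> K #> u" unfolding r_coset_def by blast
      then have "K #> u = K #> x" by (rule repr_independence[OF _ uc Ks])
      then have "y = f u" using x(2) unfolding f_def by simp
      then show "y \<in> f ` (U \<inter> M)" using uk(1) uM by blast
    qed
  qed
  have Ucl: "closedin T U" using open_subgroup_closed[OF Usub Uo] .
  have "compactin T (U \<inter> M)" using closed_compactin[OF Uc _ closedin_Int[OF Ucl Mcl]] by blast
  then have "compactin X (U \<inter> M)" unfolding X_def compactin_subtopology by blast
  then have "compactin (quotient_topology X f) (f ` (U \<inter> M))"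
    by (rule image_compactin[OF _ continuous_map_quotient])
  then have "compactin (quotient_topology X f) (topspace (quotient_topology X f))"
    using img tX by (simp add: topspace_quotient_topology)
  then show ?thesis unfolding Q compact_space_def .
qed

lemma transfer:
  assumes H: "subgroup H G" and UH: "U \<subseteq> H"
    and c: "w \<in> carrier G" "w' \<in> carrier G" "r \<in> carrier G" "r' \<in> carrier G"
    and a: "inv r \<otimes> w \<in> U" and b: "inv r' \<otimes> w' \<in> U"
  shows "inv w \<otimes> w' \<in> H \<longleftrightarrow> inv r \<otimes> r' \<in> H"
proof -
  have aH: "inv r \<otimes> w \<in> H" and bH: "inv r' \<otimes> w' \<in> H" using a b UH by auto
  have e1: "inv w \<otimes> w' = inv (inv r \<otimes> w) \<otimes> (inv r \<otimes> r') \<otimes> (inv r' \<otimes> w')"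
    using c by (simp add: m_assoc inv_mult_group cancel1)
  have e2: "inv r \<otimes> r' = (inv r \<otimes> w) \<otimes> (inv w \<otimes> w') \<otimes> inv (inv r' \<otimes> w')"
    using c by (simp add: m_assoc inv_mult_group cancel1)
  show ?thesis
  proof
    assume h: "inv w \<otimes> w' \<in> H"
    have "(inv r \<otimes> w) \<otimes> (inv w \<otimes> w') \<otimes> inv (inv r' \<otimes> w') \<in> H"
      by (intro subgroup.m_closed[OF H] subgroup.m_inv_closed[OF H] aH bH h)
    then show "inv r \<otimes> r' \<in> H" using e2 by simp
  next
    assume h: "inv r \<otimes> r' \<in> H"
    have "inv (inv r \<otimes> w) \<otimes> (inv r \<otimes> r') \<otimes> (inv r' \<otimes> w') \<in> H"
      by (intro subgroup.m_closed[OF H] subgroup.m_inv_closed[OF H] aH bH h)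
    then show "inv w \<otimes> w' \<in> H" using e1 by simp
  qed
qed

lemma cover_step:
  assumes K: "K \<lhd> G" and L: "L \<lhd> G" and KL: "K \<subseteq> L" and dd: "d K = d L"
    and u: "u \<in> U" "u \<in> L" and s: "s \<in> S"
  shows "inv s \<otimes> (u \<otimes> s) \<in> UH K"
proof -
  have sW: "s \<in> W" using s S_W by blast
  have usW: "u \<otimes> s \<in> W" using US_W[OF u(1) s] .
  obtain r where r: "r \<in> R" "inv r \<otimes> s \<in> U" using R_props(3)[OF sW] by blast
  obtain r' where r': "r' \<in> R" "inv r' \<otimes> (u \<otimes> s) \<in> U" using R_props(3)[OF usW] by blast
  have c: "s \<in> carrier G" "u \<otimes> s \<in> carrier G" "r \<in> carrier G" "r' \<in> carrier G"
    using sW usW r r' W_car R_car by auto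
  have uc: "u \<in> carrier G" using u Ucar by blast
  have sc: "s \<in> carrier G" using c by blast
  have "inv s \<otimes> u \<otimes> s \<in> L" by (rule normal_conj'[OF L sc u(2)])
  then have "inv s \<otimes> (u \<otimes> s) \<in> L" using uc sc by (simp add: m_assoc)
  then have "inv s \<otimes> (u \<otimes> s) \<in> UH L" using N_UH[OF L] by blast
  then have "inv r \<otimes> r' \<in> UH L"
    using transfer[OF UH_subgroup[OF L] U_UH[OF L] c r(2) r'(2)] by blast
  then have "inv r \<otimes> r' \<in> UH K" using d_eq_rel[OF K L KL dd r(1) r'(1)] by blast
  then show ?thesis
    using transfer[OF UH_subgroup[OF K] U_UH[OF K] c r(2) r'(2)] by blast
qed

lemma M_conj_S:
  assumes K: "K \<lhd> G" and L: "L \<lhd> G" and KL: "K \<subseteq> L" and dd: "d K = d L"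
    and x: "x \<in> L \<inter> UH K" and s: "s \<in> S"
  shows "inv s \<otimes> x \<otimes> s \<in> L \<inter> UH K"
proof -
  have sc: "s \<in> carrier G" using s S_car by blast
  obtain u k where uk: "u \<in> U" "k \<in> K" "x = u \<otimes> k" using x unfolding UH_def by blast
  have uc: "u \<in> carrier G" and kc: "k \<in> carrier G" using uk Ucar normal_sub[OF K] by auto
  have xL: "x \<in> L" using x by blast
  have "x \<otimes> inv k \<in> L"
    using subgroup.m_closed[OF normal_imp_subgroup[OF L] xL subgroup.m_inv_closed[OF normal_imp_subgroup[OF L]]] uk(2) KL
    by blast
  moreover have "x \<otimes> inv k = u" unfolding uk(3) using uc kc by (simp add: m_assoc)
  ultimately have uL: "u \<in> L" by simp
  have a: "inv s \<otimes> (u \<otimes> s) \<in> UH K" by (rule cover_step[OF K L KL dd uk(1) uL s])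
  have "inv s \<otimes> k \<otimes> s \<in> K" by (rule normal_conj'[OF K sc uk(2)])
  then have b: "inv s \<otimes> k \<otimes> s \<in> UH K" using N_UH[OF K] by blast
  have "(inv s \<otimes> (u \<otimes> s)) \<otimes> (inv s \<otimes> k \<otimes> s) \<in> UH K"
    by (rule subgroup.m_closed[OF UH_subgroup[OF K] a b])
  moreover have "(inv s \<otimes> (u \<otimes> s)) \<otimes> (inv s \<otimes> k \<otimes> s) = inv s \<otimes> x \<otimes> s"
    unfolding uk(3) using uc kc sc by (simp add: m_assoc cancel1)
  ultimately have "inv s \<otimes> x \<otimes> s \<in> UH K" by simp
  moreover have "inv s \<otimes> x \<otimes> s \<in> L" by (rule normal_conj'[OF L sc xL])
  ultimately show ?thesis by blast
qed

lemma M_conj_gen: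
  assumes K: "K \<lhd> G" and L: "L \<lhd> G" and KL: "K \<subseteq> L" and dd: "d K = d L"
    and g: "g \<in> generate G K0"
  shows "\<forall>x \<in> L \<inter> UH K. inv g \<otimes> x \<otimes> g \<in> L \<inter> UH K"
  using g
proof (induction g rule: generate.induct)
  case one
  have "L \<inter> UH K \<subseteq> carrier G" using normal_sub[OF L] by blast
  then show ?case by auto
next
  case (incl h)
  then have "h \<in> S" unfolding S_def by blast
  then show ?case using M_conj_S[OF K L KL dd] by blast
next
  case (inv h)
  then have "inv h \<in> S" unfolding S_def by blast
  then show ?case using M_conj_S[OF K L KL dd] by blast
next
  case (eng h1 h2)
  have c1: "h1 \<in> carrier G" and c2: "h2 \<in> carrier G" using eng.hyps gen by auto
  show ?case
  proof
    fix x assume x: "x \<in> L \<inter> UH K"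
    have xc: "x \<in> carrier G" using x normal_sub[OF L] by blast
    have "inv h1 \<otimes> x \<otimes> h1 \<in> L \<inter> UH K" using eng.IH(1) x by blast
    then have "inv h2 \<otimes> (inv h1 \<otimes> x \<otimes> h1) \<otimes> h2 \<in> L \<inter> UH K" using eng.IH(2) by blast
    moreover have "inv h2 \<otimes> (inv h1 \<otimes> x \<otimes> h1) \<otimes> h2 = inv (h1 \<otimes> h2) \<otimes> x \<otimes> (h1 \<otimes> h2)"
      using c1 c2 xc by (simp add: m_assoc inv_mult_group)
    ultimately show "inv (h1 \<otimes> h2) \<otimes> x \<otimes> (h1 \<otimes> h2) \<in> L \<inter> UH K" by simp
  qed
qed

lemma M_normal:
  assumes K: "K \<lhd> G" and L: "L \<lhd> G" and KL: "K \<subseteq> L" and dd: "d K = d L"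
  shows "L \<inter> UH K \<lhd> G"
proof -
  have sg: "subgroup (L \<inter> UH K) G"
    by (rule subgroups_Inter_pair[OF normal_imp_subgroup[OF L] UH_subgroup[OF K]])
  have "\<forall>x\<in>carrier G. \<forall>h\<in>L \<inter> UH K. x \<otimes> h \<otimes> inv x \<in> L \<inter> UH K"
  proof (intro ballI)
    fix x h assume x: "x \<in> carrier G" and h: "h \<in> L \<inter> UH K"
    have "inv x \<in> generate G K0" using x gen by simp
    then have "inv (inv x) \<otimes> h \<otimes> inv x \<in> L \<inter> UH K" using M_conj_gen[OF K L KL dd] h by blast
    then show "x \<otimes> h \<otimes> inv x \<in> L \<inter> UH K" using x by simp
  qed
  then show ?thesis using sg normal_inv_iff by blast
qed

end

lemma chain_min:
  assumes "finite F" "F \<subseteq> C" "\<forall>X\<in>C. \<forall>Y\<in>C. X \<subseteq> Y \<or> Y \<subseteq> X" "C \<noteq> {}"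
  shows "\<exists>N0\<in>C. \<forall>X\<in>F. N0 \<subseteq> X"
  using assms(1,2)
proof (induction F rule: finite_induct)
  case empty
  then show ?case using assms(4) by auto
next
  case (insert x F)
  then have "F \<subseteq> C" by simp
  then obtain N0 where N0: "N0 \<in> C" "\<forall>X\<in>F. N0 \<subseteq> X" using insert.IH by blast
  have xC: "x \<in> C" using insert.prems by simp
  show ?case
  proof (cases "x \<subseteq> N0")
    case True
    have "\<forall>X\<in>insert x F. x \<subseteq> X"
    proof
      fix X assume "X \<in> insert x F"
      then show "x \<subseteq> X"
      proof
        assume "X = x" then show ?thesis by simp
      next
        assume "X \<in> F" then have "N0 \<subseteq> X" using N0(2) by simp
        then show ?thesis using True by (rule order_trans[rotated])
      qed
    qed
    then show ?thesis using xC by blast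
  next
    case False
    then have "N0 \<subseteq> x" using assms(3) N0(1) xC by blast
    then have "\<forall>X\<in>insert x F. N0 \<subseteq> X" using N0(2) by simp
    then show ?thesis using N0(1) by blast
  qed
qed

lemma Zorn_min:
  assumes sub: "\<forall>A\<in>E. A \<subseteq> X"
    and ch: "\<And>C. subset.chain E C \<Longrightarrow> \<exists>L\<in>E. \<forall>N\<in>C. L \<subseteq> N"
  shows "\<exists>M\<in>E. \<forall>N\<in>E. N \<subseteq> M \<longrightarrow> N = M"
proof -
  define E' where "E' = (\<lambda>A. X - A) ` E"
  have "\<exists>M'\<in>E'. \<forall>Y\<in>E'. M' \<subseteq> Y \<longrightarrow> Y = M'"
  proof (rule subset_Zorn)
    fix C' assume C': "subset.chain E' C'"
    have C'E: "C' \<subseteq> E'" and C'ch: "\<forall>P\<in>C'. \<forall>Q\<in>C'. P \<subseteq> Q \<or> Q \<subseteq> P"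
      using C' unfolding subset_chain_def by auto
    define C where "C = {A\<in>E. X - A \<in> C'}"
    have CE: "C \<subseteq> E" unfolding C_def by blast
    have "\<forall>A\<in>C. \<forall>B\<in>C. A \<subseteq> B \<or> B \<subseteq> A"
    proof (intro ballI)
      fix A B assume A: "A \<in> C" and B: "B \<in> C"
      have AX: "A \<subseteq> X" and BX: "B \<subseteq> X" using A B sub CE by auto
      have h1: "X - A \<in> C'" using A unfolding C_def by simp
      have h2: "X - B \<in> C'" using B unfolding C_def by simp
      have "X - A \<subseteq> X - B \<or> X - B \<subseteq> X - A" using C'ch[rule_format, OF h1 h2] .
      then show "A \<subseteq> B \<or> B \<subseteq> A"
      proof
        assume "X - A \<subseteq> X - B" then have "B \<subseteq> A" using BX by auto
        then show ?thesis by blast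
      next
        assume "X - B \<subseteq> X - A" then have "A \<subseteq> B" using AX by auto
        then show ?thesis by blast
      qed
    qed
    then have "subset.chain E C" unfolding subset_chain_def using CE by blast
    then obtain L where L: "L \<in> E" "\<forall>N\<in>C. L \<subseteq> N" using ch by blast
    have "\<forall>Y\<in>C'. Y \<subseteq> X - L"
    proof
      fix Y assume Y: "Y \<in> C'"
      then have "Y \<in> E'" using C'E by blast
      then obtain A where A: "A \<in> E" "Y = X - A" unfolding E'_def by blast
      then have "A \<in> C" unfolding C_def using Y by blast
      then have "L \<subseteq> A" using L(2) by blast
      then show "Y \<subseteq> X - L" using A(2) by blast
    qed
    moreover have "X - L \<in> E'" unfolding E'_def using L(1) by blast
    ultimately show "\<exists>U\<in>E'. \<forall>X\<in>C'. X \<subseteq> U" by blast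
  qed
  then obtain M' where M': "M' \<in> E'" "\<forall>Y\<in>E'. M' \<subseteq> Y \<longrightarrow> Y = M'" by blast
  then obtain M where M: "M \<in> E" "M' = X - M" unfolding E'_def by blast
  have "\<forall>N\<in>E. N \<subseteq> M \<longrightarrow> N = M"
  proof (intro ballI impI)
    fix N assume N: "N \<in> E" "N \<subseteq> M"
    then have "X - N \<in> E'" unfolding E'_def by blast
    moreover have "M' \<subseteq> X - N" using N(2) M(2) by blast
    ultimately have e: "X - N = X - M" using M' M(2) by blast
    have "N \<subseteq> X" "M \<subseteq> X" using N(1) M(1) sub by auto
    then show "N = M" using e by blast
  qed
  then show ?thesis using M(1) by blast
qed

context TG begin

lemma closure_normal:
  assumes A: "A \<lhd> G"
  shows "(T closure_of A) \<lhd> G"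
proof -
  define C where "C = T closure_of A"
  have Ac: "A \<subseteq> carrier G" using normal_sub[OF A] .
  have AC: "A \<subseteq> C" unfolding C_def using Ac top by (simp add: closure_of_subset)
  have Cc: "C \<subseteq> carrier G" unfolding C_def using closure_of_subset_topspace[of T A] top by simp
  have As: "subgroup A G" using normal_imp_subgroup[OF A] .
  have img: "f ` C \<subseteq> C" if f: "continuous_map T T f" and fA: "f ` A \<subseteq> A" for f
  proof -
    have "f ` C \<subseteq> T closure_of (f ` A)" unfolding C_def by (rule continuous_map_image_closure_subset[OF f])
    also have "\<dots> \<subseteq> C" unfolding C_def by (rule closure_of_mono[OF fA])
    finally show ?thesis .
  qed
  have sg: "subgroup C G"
  proof (rule subgroupI)
    show "C \<subseteq> carrier G" using Cc .
    have "\<one> \<in> C" using AC subgroup.one_closed[OF As] by (rule subsetD)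
    then show "C \<noteq> {}" by auto
  next
    fix a assume a: "a \<in> C"
    have "(\<lambda>x. inv x) ` A \<subseteq> A"
    proof (rule image_subsetI)
      fix x assume "x \<in> A"
      then show "inv x \<in> A" by (rule subgroup.m_inv_closed[OF As])
    qed
    then have "(\<lambda>x. inv x) ` C \<subseteq> C" by (rule img[OF inv_cont])
    moreover have "inv a \<in> (\<lambda>x. inv x) ` C" using a by (rule imageI)
    ultimately show "inv a \<in> C" by (rule subsetD)
  next
    fix a b assume a: "a \<in> C" and b: "b \<in> C"
    define f where "f = (\<lambda>p. fst p \<otimes> snd p)"
    have fc: "continuous_map (prod_topology T T) T f"
    proof -
      have "f = (\<lambda>(x,y). x \<otimes> y)" unfolding f_def by (rule ext) (simp add: case_prod_beta)
      then show ?thesis using mult_cont by simp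
    qed
    have "f ` ((prod_topology T T) closure_of (A \<times> A)) \<subseteq> T closure_of (f ` (A \<times> A))"
      by (rule continuous_map_image_closure_subset[OF fc])
    also have "\<dots> \<subseteq> C"
    proof -
      have "f ` (A \<times> A) \<subseteq> A"
      proof (rule image_subsetI)
        fix p assume p: "p \<in> A \<times> A"
        have "fst p \<in> A" "snd p \<in> A" using p by (auto simp: mem_Times_iff)
        then have "fst p \<otimes> snd p \<in> A" by (rule subgroup.m_closed[OF As])
        then show "f p \<in> A" unfolding f_def .
      qed
      then show ?thesis unfolding C_def by (rule closure_of_mono)
    qed
    finally have fCC: "f ` (C \<times> C) \<subseteq> C" unfolding C_def closure_of_Times .
    have "(a, b) \<in> C \<times> C" using a b by (rule SigmaI)
    then have "f (a, b) \<in> f ` (C \<times> C)" by (rule imageI)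
    then have "f (a, b) \<in> C" using fCC by (rule subsetD[rotated])
    then show "a \<otimes> b \<in> C" unfolding f_def by simp
  qed
  have "\<forall>x\<in>carrier G. \<forall>h\<in>C. x \<otimes> h \<otimes> inv x \<in> C"
  proof (intro ballI)
    fix x h assume x: "x \<in> carrier G" and h: "h \<in> C"
    have "(\<lambda>y. x \<otimes> y \<otimes> inv x) ` A \<subseteq> A"
    proof (rule image_subsetI)
      fix y assume "y \<in> A"
      then show "x \<otimes> y \<otimes> inv x \<in> A" by (rule normal_conj[OF A x])
    qed
    then have "(\<lambda>y. x \<otimes> y \<otimes> inv x) ` C \<subseteq> C" by (rule img[OF cont_conj[OF x]])
    moreover have "x \<otimes> h \<otimes> inv x \<in> (\<lambda>y. x \<otimes> y \<otimes> inv x) ` C" using h by (rule imageI)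
    ultimately show "x \<otimes> h \<otimes> inv x \<in> C" by (rule subsetD)
  qed
  then have "C \<lhd> G" by (rule normal_inv_iff[THEN iffD2, OF conjI[OF sg]])
  then show ?thesis by (simp only: C_def)
qed

lemma Union_chain_normal:
  assumes C: "\<forall>N\<in>C. N \<lhd> G" and ch: "\<forall>X\<in>C. \<forall>Y\<in>C. X \<subseteq> Y \<or> Y \<subseteq> X" and ne: "C \<noteq> {}"
  shows "\<Union>C \<lhd> G"
proof -
  have sg: "subgroup (\<Union>C) G"
  proof (rule subgroupI)
    show "\<Union>C \<subseteq> carrier G"
    proof
      fix x assume "x \<in> \<Union>C"
      then obtain N where N: "N \<in> C" "x \<in> N" by blast
      have "N \<lhd> G" using C N(1) by blast
      then show "x \<in> carrier G" using normal_sub N(2) by blast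
    qed
    obtain N where N: "N \<in> C" using ne by blast
    have "N \<lhd> G" using C N(1) by blast
    then have "\<one> \<in> N" using normal_imp_subgroup subgroup.one_closed by blast
    then show "\<Union>C \<noteq> {}" using N by blast
  next
    fix a assume "a \<in> \<Union>C"
    then obtain N where N: "N \<in> C" "a \<in> N" by blast
    have "N \<lhd> G" using C N(1) by blast
    then have "inv a \<in> N" by (rule subgroup.m_inv_closed[OF normal_imp_subgroup N(2)])
    then show "inv a \<in> \<Union>C" using N(1) by blast
  next
    fix a b assume "a \<in> \<Union>C" "b \<in> \<Union>C"
    then obtain N1 N2 where N: "N1 \<in> C" "a \<in> N1" "N2 \<in> C" "b \<in> N2" by blast
    have s1: "subgroup N1 G" using C N(1) normal_imp_subgroup by blast
    have s2: "subgroup N2 G" using C N(3) normal_imp_subgroup by blast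
    have "N1 \<subseteq> N2 \<or> N2 \<subseteq> N1" using ch N(1) N(3) by blast
    then show "a \<otimes> b \<in> \<Union>C"
    proof
      assume "N1 \<subseteq> N2"
      then have "a \<in> N2" using N(2) by (rule subsetD)
      then have "a \<otimes> b \<in> N2" using N(4) by (rule subgroup.m_closed[OF s2])
      then show ?thesis using N(3) by (rule UnionI[rotated])
    next
      assume "N2 \<subseteq> N1"
      then have "b \<in> N1" using N(4) by (rule subsetD)
      with N(2) have "a \<otimes> b \<in> N1" by (rule subgroup.m_closed[OF s1])
      then show ?thesis using N(1) by (rule UnionI[rotated])
    qed
  qed
  have "\<forall>x\<in>carrier G. \<forall>h\<in>\<Union>C. x \<otimes> h \<otimes> inv x \<in> \<Union>C"
  proof (intro ballI)
    fix x h assume x: "x \<in> carrier G" and "h \<in> \<Union>C"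
    then obtain N where N: "N \<in> C" "h \<in> N" by blast
    have "N \<lhd> G" using C N(1) by blast
    then have "x \<otimes> h \<otimes> inv x \<in> N" using normal_conj x N(2) by blast
    then show "x \<otimes> h \<otimes> inv x \<in> \<Union>C" using N(1) by blast
  qed
  then show ?thesis by (rule normal_inv_iff[THEN iffD2, OF conjI[OF sg]])
qed

lemma Inter_normal:
  assumes C: "\<forall>N\<in>C. N \<lhd> G" and ne: "C \<noteq> {}"
  shows "\<Inter>C \<lhd> G"
proof -
  have sg: "subgroup (\<Inter>C) G"
  proof (rule subgroups_Inter[OF _ ne])
    fix H assume "H \<in> C"
    then have "H \<lhd> G" using C by blast
    then show "subgroup H G" by (rule normal_imp_subgroup)
  qed
  have "\<forall>x\<in>carrier G. \<forall>h\<in>\<Inter>C. x \<otimes> h \<otimes> inv x \<in> \<Inter>C"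
  proof (intro ballI)
    fix x h assume x: "x \<in> carrier G" and h: "h \<in> \<Inter>C"
    show "x \<otimes> h \<otimes> inv x \<in> \<Inter>C"
    proof
      fix N assume N: "N \<in> C"
      have "N \<lhd> G" using C N by blast
      moreover have "h \<in> N" using h N by blast
      ultimately show "x \<otimes> h \<otimes> inv x \<in> N" using normal_conj x by blast
    qed
  qed
  then show ?thesis by (rule normal_inv_iff[THEN iffD2, OF conjI[OF sg]])
qed

end

context CG begin

lemma UH_I: "u \<in> U \<Longrightarrow> n \<in> N \<Longrightarrow> u \<otimes> n \<in> UH N"
  unfolding UH_def by blast

lemma UH_I': "u \<in> U \<Longrightarrow> n \<in> N \<Longrightarrow> x = u \<otimes> n \<Longrightarrow> x \<in> UH N"
  using UH_I by simp

lemma closure_UH: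
  assumes A: "A \<subseteq> carrier G"
  shows "T closure_of A \<subseteq> UH A"
proof
  fix x assume x: "x \<in> T closure_of A"
  have "x \<in> topspace T" using x closure_of_subset_topspace by (rule subsetD[rotated])
  then have xc: "x \<in> carrier G" using top by simp
  have op: "openin T (U #> x)" by (rule openin_rcoset[OF Uo xc])
  have "\<one> \<in> U" using Usub by (rule subgroup.one_closed)
  then have "\<one> \<otimes> x \<in> U #> x" unfolding r_coset_def by blast
  then have xin: "x \<in> U #> x" using xc by simp
  have "\<forall>T'. x \<in> T' \<and> openin T T' \<longrightarrow> (\<exists>y. y \<in> A \<and> y \<in> T')"
    using x unfolding in_closure_of by (rule conjunct2)
  then obtain a where a: "a \<in> A" "a \<in> U #> x" using xin op by blast
  then obtain u where u: "u \<in> U" "a = u \<otimes> x" unfolding r_coset_def by blast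
  have uc: "u \<in> carrier G" using u Ucar by blast
  have e: "x = inv u \<otimes> a" unfolding u(2) using uc xc by (simp add: cancel2)
  have "inv u \<in> U" using subgroup.m_inv_closed[OF Usub u(1)] .
  then show "x \<in> UH A" using a(1) e by (rule UH_I')
qed

lemma UH_closure:
  assumes A: "A \<subseteq> carrier G"
  shows "UH (T closure_of A) = UH A"
proof
  have "A \<subseteq> T closure_of A" using A top closure_of_subset[of A T] by simp
  then show "UH A \<subseteq> UH (T closure_of A)" by (rule UH_mono)
  show "UH (T closure_of A) \<subseteq> UH A"
  proof
    fix y assume "y \<in> UH (T closure_of A)"
    then obtain u c where uc: "u \<in> U" "c \<in> T closure_of A" "y = u \<otimes> c" unfolding UH_def by blast
    have "c \<in> UH A" using closure_UH[OF A] uc(2) by (rule subsetD)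
    then obtain u' a where ua: "u' \<in> U" "a \<in> A" "c = u' \<otimes> a" unfolding UH_def by blast
    have c: "u \<in> carrier G" "u' \<in> carrier G" "a \<in> carrier G" using uc(1) ua(1) Ucar ua(2) A by auto
    have e: "y = (u \<otimes> u') \<otimes> a" unfolding uc(3) ua(3) using c by (simp add: m_assoc)
    have "u \<otimes> u' \<in> U" using subgroup.m_closed[OF Usub uc(1) ua(1)] .
    then show "y \<in> UH A" using ua(2) e by (rule UH_I')
  qed
qed

lemma compact_chain:
  assumes g: "g \<in> carrier G" and C: "\<forall>N\<in>C. N \<lhd> G \<and> closedin T N"
    and ch: "\<forall>X\<in>C. \<forall>Y\<in>C. X \<subseteq> Y \<or> Y \<subseteq> X" and ne: "C \<noteq> {}"
    and gin: "\<forall>N\<in>C. g \<in> UH N"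
  shows "g \<in> UH (\<Inter>C)"
proof -
  define F where "F N = U \<inter> (g <# N)" for N
  have Fne: "\<exists>u. u \<in> F N" if N: "N \<in> C" for N
  proof -
    have "g \<in> UH N" using gin N by blast
    then obtain u n where un: "u \<in> U" "n \<in> N" "g = u \<otimes> n" unfolding UH_def by blast
    have NG: "N \<lhd> G" using C N by blast
    have c: "u \<in> carrier G" "n \<in> carrier G" using un(1) Ucar un(2) normal_sub[OF NG] by auto
    have e: "g \<otimes> inv n = u" unfolding un(3) using c by (simp add: m_assoc)
    have "inv n \<in> N" using subgroup.m_inv_closed[OF normal_imp_subgroup[OF NG] un(2)] .
    then have "g \<otimes> inv n \<in> g <# N" unfolding l_coset_def by blast
    then have "u \<in> g <# N" using e by simp
    then have "u \<in> F N" unfolding F_def using un(1) by blast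
    then show ?thesis by blast
  qed
  have Fmono: "F N \<subseteq> F N'" if "N \<subseteq> N'" for N N'
    unfolding F_def l_coset_def using that by blast
  have Ucl: "closedin T U" using open_subgroup_closed[OF Usub Uo] .
  have Fcl: "closedin T (F N)" if N: "N \<in> C" for N
  proof -
    have "closedin T N" using C N by blast
    then have "closedin T (g <# N)" using g by (rule closedin_lcoset)
    then show ?thesis unfolding F_def by (rule closedin_Int[OF Ucl])
  qed
  define O' where "O' N = topspace T - F N" for N
  have "\<exists>u. \<forall>N\<in>C. u \<in> F N"
  proof (rule ccontr)
    assume no: "\<not> (\<exists>u. \<forall>N\<in>C. u \<in> F N)"
    have cov: "U \<subseteq> \<Union>(O' ` C)"
    proof
      fix u assume u: "u \<in> U"
      then obtain N where N: "N \<in> C" "u \<notin> F N" using no by blast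
      have "u \<in> topspace T" using u Ucar top by auto
      then have "u \<in> O' N" unfolding O'_def using N(2) by blast
      then show "u \<in> \<Union>(O' ` C)" using N(1) by blast
    qed
    have opn: "\<forall>X\<in>O' ` C. openin T X" unfolding O'_def using Fcl by blast
    have "\<forall>\<U>. (\<forall>X\<in>\<U>. openin T X) \<and> U \<subseteq> \<Union>\<U> \<longrightarrow> (\<exists>\<F>. finite \<F> \<and> \<F> \<subseteq> \<U> \<and> U \<subseteq> \<Union>\<F>)"
      using Uc unfolding compactin_def by (rule conjunct2)
    then have "\<exists>\<F>. finite \<F> \<and> \<F> \<subseteq> O' ` C \<and> U \<subseteq> \<Union>\<F>" using opn cov by blast
    then obtain \<F> where Fi: "finite \<F>" "\<F> \<subseteq> O' ` C" "U \<subseteq> \<Union>\<F>" by blast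
    then obtain C0 where C0: "C0 \<subseteq> C" "finite C0" "\<F> = O' ` C0"
      by (meson finite_subset_image)
    obtain N0 where N0: "N0 \<in> C" "\<forall>X\<in>C0. N0 \<subseteq> X" using chain_min[OF C0(2) C0(1) ch ne] by blast
    obtain u where u: "u \<in> F N0" using Fne[OF N0(1)] by blast
    then have "u \<in> U" unfolding F_def by blast
    then have "u \<in> \<Union>(O' ` C0)" using Fi(3) C0(3) by blast
    then obtain X where X: "X \<in> C0" "u \<in> O' X" by blast
    have "F N0 \<subseteq> F X" using N0(2) X(1) Fmono by blast
    then have "u \<in> F X" using u by blast
    then show False using X(2) unfolding O'_def by blast
  qed
  then obtain u where u: "\<forall>N\<in>C. u \<in> F N" by blast
  obtain N1 where N1: "N1 \<in> C" using ne by blast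
  have uU: "u \<in> U" using u N1 unfolding F_def by blast
  have uc: "u \<in> carrier G" using uU Ucar by blast
  have n: "inv u \<otimes> g \<in> \<Inter>C"
  proof
    fix N assume N: "N \<in> C"
    have NG: "N \<lhd> G" using C N by blast
    have Nc: "N \<subseteq> carrier G" using normal_sub[OF NG] .
    have "u \<in> g <# N" using u N unfolding F_def by blast
    then have "inv g \<otimes> u \<in> N" using lcoset_preimage[OF g Nc] by blast
    then have "inv (inv g \<otimes> u) \<in> N" by (rule subgroup.m_inv_closed[OF normal_imp_subgroup[OF NG]])
    then show "inv u \<otimes> g \<in> N" using g uc by (simp add: inv_mult_group)
  qed
  have e: "g = u \<otimes> (inv u \<otimes> g)" using g uc by (simp add: cancel1)
  show ?thesis using uU n e by (rule UH_I')
qed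

end

definition good :: "('a, 'b) monoid_scheme \<Rightarrow> 'a topology \<Rightarrow> 'a set \<Rightarrow> 'a set \<Rightarrow> bool" where
  "good G T L K \<longleftrightarrow>
     compact_space (quotient_factor_topology G T L K) \<or>
     quotient_factor_topology G T L K =
       discrete_topology (topspace (quotient_factor_topology G T L K)) \<or>
     chief_factor G T L K"

inductive reach :: "('a, 'b) monoid_scheme \<Rightarrow> 'a topology \<Rightarrow> 'a set \<Rightarrow> bool" for G T where
  top: "reach G T (carrier G)"
| step: "closed_normal G T K \<Longrightarrow> closed_normal G T L \<Longrightarrow> K \<subseteq> L \<Longrightarrow> good G T L K \<Longrightarrow>
         reach G T L \<Longrightarrow> reach G T K"

lemma reach_series:
  assumes "reach G T K" and cc: "closed_normal G T (carrier G)"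
  shows "\<exists>N n. N 0 = K \<and> N n = carrier G \<and> (\<forall>i\<le>n. closed_normal G T (N i)) \<and>
     (\<forall>i<n. N i \<subseteq> N (Suc i)) \<and> (\<forall>i\<in>{1..n}. good G T (N i) (N (i - 1)))"
  using assms(1)
proof induction
  case top
  have "(\<lambda>_. carrier G) (0::nat) = carrier G \<and> (\<lambda>_. carrier G) (0::nat) = carrier G \<and>
     (\<forall>i\<le>0::nat. closed_normal G T ((\<lambda>_. carrier G) i)) \<and>
     (\<forall>i<0::nat. (\<lambda>_. carrier G) i \<subseteq> (\<lambda>_. carrier G) (Suc i)) \<and>
     (\<forall>i\<in>{1..0::nat}. good G T ((\<lambda>_. carrier G) i) ((\<lambda>_. carrier G) (i - 1)))"
    using cc by simp
  then show ?case by (rule exI[of _ "\<lambda>_. carrier G", OF exI[of _ 0]])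
next
  case (step K L)
  then obtain N n where N: "N 0 = L" "N n = carrier G" "\<forall>i\<le>n. closed_normal G T (N i)"
    "\<forall>i<n. N i \<subseteq> N (Suc i)" "\<forall>i\<in>{1..n}. good G T (N i) (N (i - 1))" by blast
  define N' where "N' i = (if i = 0 then K else N (i - 1))" for i
  have 1: "N' 0 = K" unfolding N'_def by simp
  have 2: "N' (Suc n) = carrier G" unfolding N'_def using N(2) by simp
  have 3: "\<forall>i\<le>Suc n. closed_normal G T (N' i)"
  proof (intro allI impI)
    fix i assume i: "i \<le> Suc n"
    show "closed_normal G T (N' i)"
    proof (cases "i = 0")
      case True then show ?thesis unfolding N'_def using step.hyps(1) by simp
    next
      case False then show ?thesis unfolding N'_def using N(3) i by simp
    qed
  qed
  have 4: "\<forall>i<Suc n. N' i \<subseteq> N' (Suc i)"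
  proof (intro allI impI)
    fix i assume i: "i < Suc n"
    show "N' i \<subseteq> N' (Suc i)"
    proof (cases "i = 0")
      case True then show ?thesis unfolding N'_def using step.hyps(3) N(1) by simp
    next
      case False
      then obtain j where j: "i = Suc j" by (cases i) auto
      then show ?thesis unfolding N'_def using N(4) i by simp
    qed
  qed
  have 5: "\<forall>i\<in>{1..Suc n}. good G T (N' i) (N' (i - 1))"
  proof
    fix i assume i: "i \<in> {1..Suc n}"
    show "good G T (N' i) (N' (i - 1))"
    proof (cases "i = 1")
      case True then show ?thesis unfolding N'_def using step.hyps(4) N(1) by simp
    next
      case False
      have i2: "2 \<le> i" using i False by simp
      define j where "j = i - 2"
      have j: "i = Suc (Suc j)" unfolding j_def using i2 by arith
      have "Suc j \<in> {1..n}" using i unfolding j by simp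
      then have "good G T (N (Suc j)) (N (Suc j - 1))" using N(5) by blast
      then show ?thesis unfolding N'_def j by simp
    qed
  qed
  have "N' 0 = K \<and> N' (Suc n) = carrier G \<and> (\<forall>i\<le>Suc n. closed_normal G T (N' i)) \<and>
     (\<forall>i<Suc n. N' i \<subseteq> N' (Suc i)) \<and> (\<forall>i\<in>{1..Suc n}. good G T (N' i) (N' (i - 1)))"
    using 1 2 3 4 5 by (intro conjI)
  then show ?case by (rule exI[of _ N', OF exI[of _ "Suc n"]])
qed

context CG begin

lemma main_step:
  assumes IH: "\<And>K'. closed_normal G T K' \<Longrightarrow> d K' < d K \<Longrightarrow> reach G T K'"
    and K: "closed_normal G T K"
  shows "reach G T K"
proof -
  have Kn: "K \<lhd> G" and Kcl: "closedin T K" using K unfolding closed_normal_def by auto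
  define D where "D = {N. closed_normal G T N \<and> K \<subseteq> N \<and> d N = d K}"
  have KD: "K \<in> D" unfolding D_def using K by simp
  have "\<exists>M\<in>D. \<forall>X\<in>D. M \<subseteq> X \<longrightarrow> X = M"
  proof (rule subset_Zorn)
    fix Ch assume Ch: "subset.chain D Ch"
    have ChD: "Ch \<subseteq> D" and ch: "\<forall>X\<in>Ch. \<forall>Y\<in>Ch. X \<subseteq> Y \<or> Y \<subseteq> X"
      using Ch unfolding subset_chain_def by auto
    show "\<exists>U\<in>D. \<forall>X\<in>Ch. X \<subseteq> U"
    proof (cases "Ch = {}")
      case True
      then show ?thesis using KD by blast
    next
      case False
      have Chn: "\<forall>N\<in>Ch. N \<lhd> G" using ChD unfolding D_def closed_normal_def by blast
      have Un: "\<Union>Ch \<lhd> G" by (rule Union_chain_normal[OF Chn ch False])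
      have Uc: "\<Union>Ch \<subseteq> carrier G" using normal_sub[OF Un] .
      define N' where "N' = T closure_of \<Union>Ch"
      have N'n: "N' \<lhd> G" unfolding N'_def by (rule closure_normal[OF Un])
      have N'cl: "closedin T N'" unfolding N'_def by simp
      have UN': "\<Union>Ch \<subseteq> N'" unfolding N'_def using Uc top closure_of_subset[of "\<Union>Ch" T] by simp
      obtain X0 where X0: "X0 \<in> Ch" using False by blast
      have "K \<subseteq> X0" using X0 ChD unfolding D_def by blast
      then have KN': "K \<subseteq> N'" using X0 UN' by blast
      have UHe: "UH N' = UH (\<Union>Ch)" unfolding N'_def by (rule UH_closure[OF Uc])
      define P where "P = {x \<in> UH (\<Union>Ch). \<exists>r\<in>R. \<exists>r'\<in>R. x = inv r \<otimes> r'}"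
      define f where "f = (\<lambda>p. inv (fst p) \<otimes> snd p)"
      have "P \<subseteq> f ` (R \<times> R)"
      proof
        fix x assume "x \<in> P"
        then obtain r r' where rr: "r \<in> R" "r' \<in> R" "x = inv r \<otimes> r'" unfolding P_def by blast
        have "(r, r') \<in> R \<times> R" using rr(1,2) by (rule SigmaI)
        then have "f (r, r') \<in> f ` (R \<times> R)" by (rule imageI)
        then show "x \<in> f ` (R \<times> R)" unfolding f_def using rr(3) by simp
      qed
      moreover have "finite (f ` (R \<times> R))" using R_props(1) by simp
      ultimately have Pfin: "finite P" by (rule finite_subset)
      have PU: "P \<subseteq> \<Union>(UH ` Ch)"
      proof
        fix x assume "x \<in> P"
        then have "x \<in> UH (\<Union>Ch)" unfolding P_def by blast
        then obtain u n where un: "u \<in> U" "n \<in> \<Union>Ch" "x = u \<otimes> n" unfolding UH_def by blast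
        then obtain N where N: "N \<in> Ch" "n \<in> N" by blast
        have "x \<in> UH N" using un(1) N(2) un(3) by (rule UH_I')
        then show "x \<in> \<Union>(UH ` Ch)" using N(1) by blast
      qed
      have chU: "subset.chain (UH ` Ch) (UH ` Ch)"
        unfolding subset_chain_def
      proof (intro conjI ballI)
        show "UH ` Ch \<subseteq> UH ` Ch" by (rule subset_refl)
        fix X Y assume "X \<in> UH ` Ch" "Y \<in> UH ` Ch"
        then obtain N1 N2 where N: "N1 \<in> Ch" "X = UH N1" "N2 \<in> Ch" "Y = UH N2" by blast
        have "N1 \<subseteq> N2 \<or> N2 \<subseteq> N1" using ch N(1) N(3) by blast
        then show "X \<subseteq> Y \<or> Y \<subseteq> X"
        proof
          assume "N1 \<subseteq> N2" then have "UH N1 \<subseteq> UH N2" by (rule UH_mono)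
          then show ?thesis using N(2,4) by simp
        next
          assume "N2 \<subseteq> N1" then have "UH N2 \<subseteq> UH N1" by (rule UH_mono)
          then show ?thesis using N(2,4) by simp
        qed
      qed
      have "UH ` Ch \<noteq> {}" using False by simp
      then obtain B where B: "B \<in> UH ` Ch" "P \<subseteq> B"
        using finite_subset_Union_chain[OF Pfin PU _ chU] by blast
      then obtain N0 where N0: "N0 \<in> Ch" "B = UH N0" by blast
      have dN0: "d N0 = d K" using N0(1) ChD unfolding D_def by blast
      have "d N' = d N0"
      proof (rule d_cong)
        fix r r' assume r: "r \<in> R" and r': "r' \<in> R"
        show "inv r \<otimes> r' \<in> UH N' \<longleftrightarrow> inv r \<otimes> r' \<in> UH N0"
        proof
          assume "inv r \<otimes> r' \<in> UH N'"
          then have "inv r \<otimes> r' \<in> UH (\<Union>Ch)" using UHe by simp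
          then have "inv r \<otimes> r' \<in> P" unfolding P_def using r r' by blast
          then show "inv r \<otimes> r' \<in> UH N0" using B(2) N0(2) by blast
        next
          assume "inv r \<otimes> r' \<in> UH N0"
          moreover have "N0 \<subseteq> N'" using N0(1) UN' by blast
          then have "UH N0 \<subseteq> UH N'" by (rule UH_mono)
          ultimately show "inv r \<otimes> r' \<in> UH N'" by (rule subsetD[rotated])
        qed
      qed
      then have "N' \<in> D" unfolding D_def closed_normal_def using N'n N'cl KN' dN0 by simp
      moreover have "\<forall>X\<in>Ch. X \<subseteq> N'" using UN' by blast
      ultimately show ?thesis by blast
    qed
  qed
  then obtain M where MD: "M \<in> D" and Mmax: "\<forall>X\<in>D. M \<subseteq> X \<longrightarrow> X = M" by blast
  have Mcn: "closed_normal G T M" and KM: "K \<subseteq> M" and dM: "d M = d K" using MD unfolding D_def by auto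
  have Mn: "M \<lhd> G" and Mcl: "closedin T M" using Mcn unfolding closed_normal_def by auto
  define M1 where "M1 = M \<inter> UH K"
  have M1n: "M1 \<lhd> G" unfolding M1_def by (rule M_normal[OF Kn Mn KM dM[symmetric]])
  have M1cl: "closedin T M1" unfolding M1_def by (rule closedin_Int[OF Mcl UH_closed[OF Kn]])
  have M1cn: "closed_normal G T M1" unfolding closed_normal_def using M1n M1cl by simp
  have KM1: "K \<subseteq> M1" unfolding M1_def using KM N_UH[OF Kn] by blast
  have M1M: "M1 \<subseteq> M" unfolding M1_def by blast
  have g1: "good G T M1 K" unfolding good_def
    using quotient_compact[OF Kn normal_imp_subgroup[OF M1n] M1cl KM1] M1_def by blast
  have g2: "good G T M M1" unfolding good_def
    using quotient_discrete[OF M1n normal_imp_subgroup[OF Mn] UH_open[OF Kn] M1_def] by blast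
  have reachM: "reach G T M"
  proof (cases "M = carrier G")
    case True
    then show ?thesis using reach.top by simp
  next
    case False
    have Mc: "M \<subseteq> carrier G" using normal_sub[OF Mn] .
    define E where "E = {N. closed_normal G T N \<and> M \<subset> N}"
    have carE: "carrier G \<in> E" unfolding E_def closed_normal_def
      using normal_self Mc False top closedin_topspace[of T] by auto
    have Esub: "\<forall>A\<in>E. A \<subseteq> carrier G" unfolding E_def closed_normal_def using normal_sub by blast
    have "\<exists>L\<in>E. \<forall>N\<in>E. N \<subseteq> L \<longrightarrow> N = L"
    proof (rule Zorn_min[OF Esub])
      fix Ch assume Ch: "subset.chain E Ch"
      have ChE: "Ch \<subseteq> E" and ch: "\<forall>X\<in>Ch. \<forall>Y\<in>Ch. X \<subseteq> Y \<or> Y \<subseteq> X"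
        using Ch unfolding subset_chain_def by auto
      show "\<exists>L\<in>E. \<forall>N\<in>Ch. L \<subseteq> N"
      proof (cases "Ch = {}")
        case True
        then show ?thesis using carE by blast
      next
        case False
        have Chcn: "\<forall>N\<in>Ch. N \<lhd> G \<and> closedin T N" using ChE unfolding E_def closed_normal_def by blast
        have Chn: "\<forall>N\<in>Ch. N \<lhd> G" using Chcn by blast
        define I where "I = \<Inter>Ch"
        have In: "I \<lhd> G" unfolding I_def by (rule Inter_normal[OF Chn False])
        have Icl: "closedin T I" unfolding I_def using Chcn False by (intro closedin_Inter) auto
        have MI: "M \<subseteq> I" unfolding I_def using ChE unfolding E_def by blast
        define P where "P = {p \<in> R \<times> R. inv (fst p) \<otimes> snd p \<notin> UH I}"
        have "\<forall>p\<in>P. \<exists>N\<in>Ch. inv (fst p) \<otimes> snd p \<notin> UH N"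
        proof
          fix p assume p: "p \<in> P"
          have "fst p \<in> R" "snd p \<in> R" using p unfolding P_def by (auto simp: mem_Times_iff)
          then have "fst p \<in> carrier G" "snd p \<in> carrier G" using R_car by auto
          then have pc: "inv (fst p) \<otimes> snd p \<in> carrier G" by simp
          show "\<exists>N\<in>Ch. inv (fst p) \<otimes> snd p \<notin> UH N"
          proof (rule ccontr)
            assume "\<not> (\<exists>N\<in>Ch. inv (fst p) \<otimes> snd p \<notin> UH N)"
            then have "\<forall>N\<in>Ch. inv (fst p) \<otimes> snd p \<in> UH N" by blast
            then have "inv (fst p) \<otimes> snd p \<in> UH I" unfolding I_def
              by (rule compact_chain[OF pc Chcn ch False])
            then show False using p unfolding P_def by blast
          qed
        qed
        then obtain phi where phi: "\<forall>p\<in>P. phi p \<in> Ch \<and> inv (fst p) \<otimes> snd p \<notin> UH (phi p)"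
          by metis
        have Pfin: "finite P" unfolding P_def using R_props(1) by simp
        have "phi ` P \<subseteq> Ch" using phi by blast
        then obtain N0 where N0: "N0 \<in> Ch" "\<forall>X\<in>phi ` P. N0 \<subseteq> X"
          using chain_min[OF finite_imageI[OF Pfin] _ ch False] by blast
        have IN0: "I \<subseteq> N0" unfolding I_def using N0(1) by blast
        have dI: "d I = d N0"
        proof (rule d_cong)
          fix r r' assume r: "r \<in> R" and r': "r' \<in> R"
          show "inv r \<otimes> r' \<in> UH I \<longleftrightarrow> inv r \<otimes> r' \<in> UH N0"
          proof
            assume "inv r \<otimes> r' \<in> UH I"
            then show "inv r \<otimes> r' \<in> UH N0" using UH_mono[OF IN0] by blast
          next
            assume h: "inv r \<otimes> r' \<in> UH N0"
            show "inv r \<otimes> r' \<in> UH I"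
            proof (rule ccontr)
              assume "inv r \<otimes> r' \<notin> UH I"
              then have pP: "(r, r') \<in> P" unfolding P_def using r r' by simp
              then have "N0 \<subseteq> phi (r, r')" using N0(2) by blast
              then have "inv r \<otimes> r' \<in> UH (phi (r, r'))" using h UH_mono by blast
              then show False using phi pP by force
            qed
          qed
        qed
        have N0E: "N0 \<in> E" using N0(1) ChE by blast
        have "I \<noteq> M"
        proof
          assume IM: "I = M"
          then have "d N0 = d K" using dI dM by simp
          moreover have "closed_normal G T N0" "M \<subset> N0" using N0E unfolding E_def by auto
          ultimately have "N0 \<in> D" unfolding D_def using KM by auto
          then have "N0 = M" using Mmax \<open>M \<subset> N0\<close> by blast
          then show False using \<open>M \<subset> N0\<close> by blast
        qed
        then have "I \<in> E" unfolding E_def closed_normal_def using In Icl MI by blast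
        moreover have "\<forall>N\<in>Ch. I \<subseteq> N" unfolding I_def by blast
        ultimately show ?thesis by blast
      qed
    qed
    then obtain L where LE: "L \<in> E" and Lmin: "\<forall>N\<in>E. N \<subseteq> L \<longrightarrow> N = L" by blast
    have Lcn: "closed_normal G T L" and MLs: "M \<subset> L" using LE unfolding E_def by auto
    have Ln: "L \<lhd> G" using Lcn unfolding closed_normal_def by blast
    have "d L \<le> d M" using d_mono[OF Mn Ln] MLs by blast
    moreover have "d L \<noteq> d K"
    proof
      assume "d L = d K"
      then have "L \<in> D" unfolding D_def using Lcn KM MLs by auto
      then have "L = M" using Mmax MLs by blast
      then show False using MLs by blast
    qed
    ultimately have "d L < d K" using dM by simp
    then have rL: "reach G T L" using IH Lcn by blast
    have "chief_factor G T L M" unfolding chief_factor_def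
    proof
      assume "\<exists>N. closed_normal G T N \<and> M \<subset> N \<and> N \<subset> L"
      then obtain N where N: "closed_normal G T N" "M \<subset> N" "N \<subset> L" by blast
      then have "N \<in> E" unfolding E_def by blast
      then have "N = L" using Lmin N(3) by blast
      then show False using N(3) by blast
    qed
    then have "good G T L M" unfolding good_def by blast
    then show ?thesis using reach.step[OF Mcn Lcn _ _ rL] MLs by blast
  qed
  have "reach G T M1" using reach.step[OF M1cn Mcn M1M g2 reachM] .
  then show ?thesis using reach.step[OF K M1cn KM1 g1] by blast
qed

lemma reach_all: "closed_normal G T K \<Longrightarrow> reach G T K"
proof -
  have "\<forall>K. closed_normal G T K \<longrightarrow> d K = n \<longrightarrow> reach G T K" for n
  proof (induction n rule: less_induct)
    case (less n)
    show ?case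
    proof (intro allI impI)
      fix K assume K: "closed_normal G T K" and dK: "d K = n"
      show "reach G T K"
      proof (rule main_step[OF _ K])
        fix K' assume "closed_normal G T K'" "d K' < d K"
        then show "reach G T K'" using less dK by blast
      qed
    qed
  qed
  then show "closed_normal G T K \<Longrightarrow> reach G T K" by blast
qed

end

theorem mainTheorem15:
  fixes G :: "('a, 'b) monoid_scheme" and T :: "'a topology"
  assumes "tdlc_group G T" and "compactly_generated G T"
  shows "\<exists>N n. essentially_chief_series G T N n"
proof -
  have tg: "topological_group G T" and H: "Hausdorff_space T" and LC: "locally_compact_space T"
    and TD: "totally_disconnected_space T"
    using assms(1) unfolding tdlc_group_def by auto
  have grp: "group G" and top: "topspace T = carrier G"
    and mc: "continuous_map (prod_topology T T) T (\<lambda>(x, y). x \<otimes>\<^bsub>G\<^esub> y)"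
    and ic: "continuous_map T T (\<lambda>x. inv\<^bsub>G\<^esub> x)"
    using tg unfolding topological_group_def by auto
  have tgG: "TG G T"
    by (rule TG.intro[OF grp]) (unfold_locales, use top mc ic in auto)
  interpret TG G T by (rule tgG)
  obtain U where U: "subgroup U G" "openin T U" "compactin T U"
    using van_dantzig[OF H LC TD] by blast
  obtain K0 where K0: "K0 \<subseteq> carrier G" "compactin T K0" "generate G K0 = carrier G"
    using assms(2) unfolding compactly_generated_def by blast
  interpret CG G T U K0
    by (rule CG.intro[OF tgG], rule CG_axioms.intro)
      (fact U(1), fact U(2), fact U(3), fact K0(1), fact K0(2), fact K0(3))
  have c1: "closed_normal G T {\<one>\<^bsub>G\<^esub>}" unfolding closed_normal_def
    using one_is_normal closedin_t1_singleton[OF Hausdorff_imp_t1_space[OF H]] top by simp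
  have cc: "closed_normal G T (carrier G)" unfolding closed_normal_def
    using normal_self top closedin_topspace[of T] by simp
  have "reach G T {\<one>\<^bsub>G\<^esub>}" using reach_all[OF c1] .
  from reach_series[OF this cc] obtain N n where
    N: "N 0 = {\<one>\<^bsub>G\<^esub>}" "N n = carrier G" "\<forall>i\<le>n. closed_normal G T (N i)"
       "\<forall>i<n. N i \<subseteq> N (Suc i)" "\<forall>i\<in>{1..n}. good G T (N i) (N (i - 1))" by blast
  have "essentially_chief_series G T N n"
    unfolding essentially_chief_series_def using N unfolding good_def by blast
  then show ?thesis by blast
qed

end
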